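(* Let $\lambda$ be a regular cardinal, let $\mathfrak{A},\mathfrak{B}$ be $\lambda$-algebroidal categories all of whose morphisms are monomorphisms, and $\mathfrak{C}$ a category. Let $F:\mathfrak{A}\to\mathfrak{C}$, $G:\mathfrak{B}\to\mathfrak{C}$ be functors such that: $F$ is faithful; $F$ is $\lambda$-cocontinuous and $\mu_{<\lambda}$-cocontinuous for all $\mu<\lambda$; $F$ preserves $\lambda$-smallness with respect to $G$; $G$ is $\lambda_{<\lambda}$-cocontinuous; $G$ preserves monomorphisms; for all $A\in\mathfrak{A}_{<\lambda}$, $B\in\mathfrak{B}_{<\lambda}$ there are at most $\lambda$ morphisms $FA\to GB$ in $\mathfrak{C}$; and $(F\downarrow G)_{<\lambda}$ has the joint embedding property and the amalgamation property. Let $(U,u,T)$ be an $(F\downarrow G)$-universal, $(F\downarrow G)_{<\lambda}$-homogeneous object of $(F\downarrow G)$. Then $U$ is $\mathfrak{A}_{<\lambda}$-saturated if and only if $F\restriction_{\mathfrak{A}_{<\lambda}}$ and $G\restriction_{\mathfrak{B}_{<\lambda}}$ have the mixed amalgamation property.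
   Context: Comma category $(F\downarrow G)$: objects $(A,f,B)$ with $f:FA\to GB$; morphisms $(a,b):(A,f,B)\to(A',f',B')$ with $f'\circ Fa=Gb\circ f$. An ordinal $\lambda$ is viewed as a category ($i\to j$ iff $i\le j$); a $\lambda$-chain is a functor from $\lambda$. An object $A$ is $\lambda$-small if whenever $(S,(f_i)_{i<\lambda})$ is a limiting cocone of a $\lambda$-chain $H$ and $h:A\to S$, there are $j<\lambda$, $g:A\to Hj$ with $h=f_j\circ g$; $\mathfrak{C}_{<\lambda}$ denotes the full subcategory of $\lambda$-small objects. Semi-$\lambda$-algebroidal: for every $\mu\le\lambda$ all $\mu$-chains in $\mathfrak{C}_{<\lambda}$ have colimits and every object is a colimit of a $\lambda$-chain in $\mathfrak{C}_{<\lambda}$; $\lambda$-algebroidal: additionally at most $\lambda$ isomorphism types in $\mathfrak{C}_{<\lambda}$ and at most $\lambda$ morphisms between any two $\lambda$-small objects. $F$ is $\lambda$-cocontinuous if it preserves limiting cocones of $\lambda$-chains, and $\mu_{<\lambda}$-cocontinuous if it preserves limiting cocones of $\mu$-chains of $\lambda$-small objects. $F$ preserves $\lambda$-smallness w.r.t. $G$ if for every $\lambda$-chain $H$ in $\mathfrak{B}$ with limiting cocone $(B,(g_i))$, every $A\in\mathfrak{A}_{<\lambda}$ and $f:FA\to GB$ there are $j<\lambda$, $h:FA\to GHj$ with $Gg_j\circ h=f$. For a full subcategory $\mathfrak{C}^*$: $U$ is $\mathfrak{C}^*$-universal if every object of $\mathfrak{C}^*$ maps to $U$; $\mathfrak{C}^*$-homogeneous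 if for $A\in\mathfrak{C}^*$, $f,g:A\to U$ there is an automorphism $h$ of $U$ with $h\circ f=g$; $\mathfrak{C}^*$-saturated if for all $A,B\in\mathfrak{C}^*$, $f:A\to U$, $g:A\to B$ there is $h:B\to U$ with $h\circ g=f$. Joint embedding and amalgamation properties of a category are the usual ones (common target for two objects; commuting completion of a span). $F$ and $G$ have the mixed amalgamation property if for all $A,B\in\mathfrak{A}$, $T_1\in\mathfrak{B}$, $g:A\to B$, $a:FA\to GT_1$ there exist $T_2\in\mathfrak{B}$, $h:T_1\to T_2$, $b:FB\to GT_2$ with $b\circ Fg=Gh\circ a$. *)

theory Defs
  imports Main
begin

record ('o,'m) category =
  Obj  :: "'o set"
  Hom  :: "'o \<Rightarrow> 'o \<Rightarrow> 'm set"
  Id   :: "'o \<Rightarrow> 'm"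
  Comp :: "'m \<Rightarrow> 'm \<Rightarrow> 'm"   (* Comp C g f = g \<circ> f *)

definition category :: "('o,'m) category \<Rightarrow> bool" where
  "category C \<longleftrightarrow>
     (\<forall>X Y. Hom C X Y \<noteq> {} \<longrightarrow> X \<in> Obj C \<and> Y \<in> Obj C) \<and>
     (\<forall>X Y X' Y' f. f \<in> Hom C X Y \<and> f \<in> Hom C X' Y' \<longrightarrow> X = X' \<and> Y = Y') \<and>
     (\<forall>X \<in> Obj C. Id C X \<in> Hom C X X) \<and>
     (\<forall>X Y Z f g. f \<in> Hom C X Y \<and> g \<in> Hom C Y Z \<longrightarrow> Comp C g f \<in> Hom C X Z) \<and>
     (\<forall>X Y Z W f g h. f \<in> Hom C X Y \<and> g \<in> Hom C Y Z \<and> h \<in> Hom C Z W \<longrightarrow>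
         Comp C h (Comp C g f) = Comp C (Comp C h g) f) \<and>
     (\<forall>X Y f. f \<in> Hom C X Y \<longrightarrow> Comp C f (Id C X) = f \<and> Comp C (Id C Y) f = f)"

definition is_mono :: "('o,'m) category \<Rightarrow> 'm \<Rightarrow> bool" where
  "is_mono C f \<longleftrightarrow> (\<forall>X A B g h. f \<in> Hom C A B \<and> g \<in> Hom C X A \<and> h \<in> Hom C X A \<and>
        Comp C f g = Comp C f h \<longrightarrow> g = h)"

definition all_mono :: "('o,'m) category \<Rightarrow> bool" where
  "all_mono C \<longleftrightarrow> (\<forall>A B f. f \<in> Hom C A B \<longrightarrow> is_mono C f)"

definition iso_objs :: "('o,'m) category \<Rightarrow> 'o \<Rightarrow> 'o \<Rightarrow> bool" where
  "iso_objs C A B \<longleftrightarrow> (\<exists>f \<in> Hom C A B. \<exists>g \<in> Hom C B A.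
      Comp C g f = Id C A \<and> Comp C f g = Id C B)"

definition automorphism :: "('o,'m) category \<Rightarrow> 'o \<Rightarrow> 'm \<Rightarrow> bool" where
  "automorphism C U h \<longleftrightarrow> h \<in> Hom C U U \<and>
      (\<exists>g \<in> Hom C U U. Comp C g h = Id C U \<and> Comp C h g = Id C U)"

definition is_functor :: "('o1,'m1) category \<Rightarrow> ('o2,'m2) category \<Rightarrow>
    ('o1 \<Rightarrow> 'o2) \<Rightarrow> ('m1 \<Rightarrow> 'm2) \<Rightarrow> bool" where
  "is_functor C D Fo Fm \<longleftrightarrow>
     (\<forall>X \<in> Obj C. Fo X \<in> Obj D) \<and>
     (\<forall>X Y f. f \<in> Hom C X Y \<longrightarrow> Fm f \<in> Hom D (Fo X) (Fo Y)) \<and>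
     (\<forall>X \<in> Obj C. Fm (Id C X) = Id D (Fo X)) \<and>
     (\<forall>X Y Z f g. f \<in> Hom C X Y \<and> g \<in> Hom C Y Z \<longrightarrow> Fm (Comp C g f) = Comp D (Fm g) (Fm f))"

definition faithful :: "('o1,'m1) category \<Rightarrow> ('m1 \<Rightarrow> 'm2) \<Rightarrow> bool" where
  "faithful C Fm \<longleftrightarrow> (\<forall>X Y f g. f \<in> Hom C X Y \<and> g \<in> Hom C X Y \<and> Fm f = Fm g \<longrightarrow> f = g)"

definition preserves_monos :: "('o1,'m1) category \<Rightarrow> ('o2,'m2) category \<Rightarrow> ('m1 \<Rightarrow> 'm2) \<Rightarrow> bool" where
  "preserves_monos C D Fm \<longleftrightarrow> (\<forall>X Y f. f \<in> Hom C X Y \<and> is_mono C f \<longrightarrow> is_mono D (Fm f))"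

text \<open>An ordinal is represented by a well-order s; a s-chain is a functor from s (i \<rightarrow> j iff (i,j) \<in> s).\<close>

definition chain :: "('o,'m) category \<Rightarrow> 'i rel \<Rightarrow> ('i \<Rightarrow> 'o) \<Rightarrow> ('i \<Rightarrow> 'i \<Rightarrow> 'm) \<Rightarrow> bool" where
  "chain C s Ho Hm \<longleftrightarrow> Well_order s \<and>
     (\<forall>i \<in> Field s. Ho i \<in> Obj C) \<and>
     (\<forall>i j. (i,j) \<in> s \<longrightarrow> Hm i j \<in> Hom C (Ho i) (Ho j)) \<and>
     (\<forall>i \<in> Field s. Hm i i = Id C (Ho i)) \<and>
     (\<forall>i j k. (i,j) \<in> s \<and> (j,k) \<in> s \<longrightarrow> Comp C (Hm j k) (Hm i j) = Hm i k)"

definition cocone :: "('o,'m) category \<Rightarrow> 'i rel \<Rightarrow> ('i \<Rightarrow> 'o) \<Rightarrow> ('i \<Rightarrow> 'i \<Rightarrow> 'm)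
    \<Rightarrow> 'o \<Rightarrow> ('i \<Rightarrow> 'm) \<Rightarrow> bool" where
  "cocone C s Ho Hm S f \<longleftrightarrow> S \<in> Obj C \<and>
     (\<forall>i \<in> Field s. f i \<in> Hom C (Ho i) S) \<and>
     (\<forall>i j. (i,j) \<in> s \<longrightarrow> Comp C (f j) (Hm i j) = f i)"

definition limiting_cocone :: "('o,'m) category \<Rightarrow> 'i rel \<Rightarrow> ('i \<Rightarrow> 'o) \<Rightarrow> ('i \<Rightarrow> 'i \<Rightarrow> 'm)
    \<Rightarrow> 'o \<Rightarrow> ('i \<Rightarrow> 'm) \<Rightarrow> bool" where
  "limiting_cocone C s Ho Hm S f \<longleftrightarrow> cocone C s Ho Hm S f \<and>
     (\<forall>S' f'. cocone C s Ho Hm S' f' \<longrightarrow>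
        (\<exists>!h. h \<in> Hom C S S' \<and> (\<forall>i \<in> Field s. Comp C h (f i) = f' i)))"

definition has_colimit :: "('o,'m) category \<Rightarrow> 'i rel \<Rightarrow> ('i \<Rightarrow> 'o) \<Rightarrow> ('i \<Rightarrow> 'i \<Rightarrow> 'm) \<Rightarrow> bool" where
  "has_colimit C s Ho Hm \<longleftrightarrow> (\<exists>S f. limiting_cocone C s Ho Hm S f)"

text \<open>The cardinal lambda is represented by a cardinal order r (viewed as the initial ordinal).\<close>

definition small :: "('o,'m) category \<Rightarrow> 'i rel \<Rightarrow> 'o \<Rightarrow> bool" where
  "small C r A \<longleftrightarrow> A \<in> Obj C \<and>
     (\<forall>Ho Hm S f h. chain C r Ho Hm \<and> limiting_cocone C r Ho Hm S f \<and> h \<in> Hom C A S \<longrightarrow>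
        (\<exists>j \<in> Field r. \<exists>g \<in> Hom C A (Ho j). h = Comp C (f j) g))"

definition semi_algebroidal :: "('o,'m) category \<Rightarrow> 'i rel \<Rightarrow> bool" where
  "semi_algebroidal C r \<longleftrightarrow>
     (\<forall>s :: 'i rel. Well_order s \<and> (s, r) \<in> ordLeq \<longrightarrow>
        (\<forall>Ho Hm. chain C s Ho Hm \<and> (\<forall>i \<in> Field s. small C r (Ho i)) \<longrightarrow> has_colimit C s Ho Hm)) \<and>
     (\<forall>X \<in> Obj C. \<exists>Ho Hm f. chain C r Ho Hm \<and> (\<forall>i \<in> Field r. small C r (Ho i)) \<and>
        limiting_cocone C r Ho Hm X f)"

definition algebroidal :: "('o,'m) category \<Rightarrow> 'i rel \<Rightarrow> bool" where
  "algebroidal C r \<longleftrightarrow> semi_algebroidal C r \<and>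
     (\<exists>R. R \<subseteq> {A. small C r A} \<and> (card_of R, r) \<in> ordLeq \<and>
          (\<forall>A. small C r A \<longrightarrow> (\<exists>B \<in> R. iso_objs C A B))) \<and>
     (\<forall>A B. small C r A \<and> small C r B \<longrightarrow> (card_of (Hom C A B), r) \<in> ordLeq)"

definition regular_cardinal :: "'i rel \<Rightarrow> bool" where
  "regular_cardinal r \<longleftrightarrow> Card_order r \<and> \<not> finite (Field r) \<and> regularCard r"

definition preserves_colimits_of ::
  "('o1,'m1) category \<Rightarrow> ('o2,'m2) category \<Rightarrow> ('o1 \<Rightarrow> 'o2) \<Rightarrow> ('m1 \<Rightarrow> 'm2)
     \<Rightarrow> 'i rel \<Rightarrow> ('o1 \<Rightarrow> bool) \<Rightarrow> bool" where
  "preserves_colimits_of C D Fo Fm s P \<longleftrightarrow>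
     (\<forall>Ho Hm S f. chain C s Ho Hm \<and> (\<forall>i \<in> Field s. P (Ho i)) \<and> limiting_cocone C s Ho Hm S f \<longrightarrow>
        limiting_cocone D s (\<lambda>i. Fo (Ho i)) (\<lambda>i j. Fm (Hm i j)) (Fo S) (\<lambda>i. Fm (f i)))"

definition cocontinuous where
  "cocontinuous C D Fo Fm r \<longleftrightarrow> preserves_colimits_of C D Fo Fm r (\<lambda>_. True)"

text \<open>mu_{<lambda}-cocontinuous: preserves limiting cocones of mu-chains of lambda-small objects.\<close>
definition small_cocontinuous where
  "small_cocontinuous C D Fo Fm (s :: 'i rel) (r :: 'i rel) \<longleftrightarrow> preserves_colimits_of C D Fo Fm s (small C r)"

definition preserves_smallness_wrt ::
  "('oa,'ma) category \<Rightarrow> ('ob,'mb) category \<Rightarrow> ('oc,'mc) category \<Rightarrow>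
   ('oa \<Rightarrow> 'oc) \<Rightarrow> ('ob \<Rightarrow> 'oc) \<Rightarrow> ('mb \<Rightarrow> 'mc) \<Rightarrow> 'i rel \<Rightarrow> bool" where
  "preserves_smallness_wrt A B C Fo Go Gm r \<longleftrightarrow>
     (\<forall>Ho Hm T g X f. chain B r Ho Hm \<and> limiting_cocone B r Ho Hm T g \<and> small A r X \<and>
         f \<in> Hom C (Fo X) (Go T) \<longrightarrow>
        (\<exists>j \<in> Field r. \<exists>h \<in> Hom C (Fo X) (Go (Ho j)). Comp C (Gm (g j)) h = f))"

definition comma ::
  "('oa,'ma) category \<Rightarrow> ('ob,'mb) category \<Rightarrow> ('oc,'mc) category \<Rightarrow>
   ('oa \<Rightarrow> 'oc) \<Rightarrow> ('ma \<Rightarrow> 'mc) \<Rightarrow> ('ob \<Rightarrow> 'oc) \<Rightarrow> ('mb \<Rightarrow> 'mc) \<Rightarrow>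
   ('oa \<times> 'mc \<times> 'ob, ('oa \<times> 'mc \<times> 'ob) \<times> ('ma \<times> 'mb) \<times> ('oa \<times> 'mc \<times> 'ob)) category" where
  "comma A B C Fo Fm Go Gm =
     \<lparr> Obj = {(X, u, Y). X \<in> Obj A \<and> Y \<in> Obj B \<and> u \<in> Hom C (Fo X) (Go Y)},
       Hom = (\<lambda>(X, u, Y) (X', u', Y').
          {((X, u, Y), (a, b), (X', u', Y')) | a b.
             X \<in> Obj A \<and> Y \<in> Obj B \<and> u \<in> Hom C (Fo X) (Go Y) \<and>
             X' \<in> Obj A \<and> Y' \<in> Obj B \<and> u' \<in> Hom C (Fo X') (Go Y') \<and>
             a \<in> Hom A X X' \<and> b \<in> Hom B Y Y' \<and> Comp C u' (Fm a) = Comp C (Gm b) u}),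
       Id = (\<lambda>(X, u, Y). ((X, u, Y), (Id A X, Id B Y), (X, u, Y))),
       Comp = (\<lambda>(S', (a', b'), T') (S, (a, b), T). (S, (Comp A a' a, Comp B b' b), T')) \<rparr>"

definition joint_embedding :: "('o,'m) category \<Rightarrow> ('o \<Rightarrow> bool) \<Rightarrow> bool" where
  "joint_embedding C P \<longleftrightarrow>
     (\<forall>X Y. P X \<and> P Y \<longrightarrow> (\<exists>Z. P Z \<and> Hom C X Z \<noteq> {} \<and> Hom C Y Z \<noteq> {}))"

definition amalgamation :: "('o,'m) category \<Rightarrow> ('o \<Rightarrow> bool) \<Rightarrow> bool" where
  "amalgamation C P \<longleftrightarrow>
     (\<forall>X Y Z f g. P X \<and> P Y \<and> P Z \<and> f \<in> Hom C X Y \<and> g \<in> Hom C X Z \<longrightarrow>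
        (\<exists>W f' g'. P W \<and> f' \<in> Hom C Y W \<and> g' \<in> Hom C Z W \<and> Comp C f' f = Comp C g' g))"

definition universal :: "('o,'m) category \<Rightarrow> ('o \<Rightarrow> bool) \<Rightarrow> 'o \<Rightarrow> bool" where
  "universal C P U \<longleftrightarrow> U \<in> Obj C \<and> (\<forall>X. P X \<longrightarrow> Hom C X U \<noteq> {})"

definition homogeneous :: "('o,'m) category \<Rightarrow> ('o \<Rightarrow> bool) \<Rightarrow> 'o \<Rightarrow> bool" where
  "homogeneous C P U \<longleftrightarrow>
     (\<forall>X f g. P X \<and> f \<in> Hom C X U \<and> g \<in> Hom C X U \<longrightarrow>
        (\<exists>h. automorphism C U h \<and> Comp C h f = g))"

definition saturated :: "('o,'m) category \<Rightarrow> ('o \<Rightarrow> bool) \<Rightarrow> 'o \<Rightarrow> bool" where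
  "saturated C P U \<longleftrightarrow>
     (\<forall>X Y f g. P X \<and> P Y \<and> f \<in> Hom C X U \<and> g \<in> Hom C X Y \<longrightarrow>
        (\<exists>h \<in> Hom C Y U. Comp C h g = f))"

definition mixed_amalgamation ::
  "('oa,'ma) category \<Rightarrow> ('ob,'mb) category \<Rightarrow> ('oc,'mc) category \<Rightarrow>
   ('oa \<Rightarrow> 'oc) \<Rightarrow> ('ma \<Rightarrow> 'mc) \<Rightarrow> ('ob \<Rightarrow> 'oc) \<Rightarrow> ('mb \<Rightarrow> 'mc) \<Rightarrow>
   ('oa \<Rightarrow> bool) \<Rightarrow> ('ob \<Rightarrow> bool) \<Rightarrow> bool" where
  "mixed_amalgamation A B C Fo Fm Go Gm PA PB \<longleftrightarrow>
     (\<forall>X Y T1 g a. PA X \<and> PA Y \<and> PB T1 \<and> g \<in> Hom A X Y \<and> a \<in> Hom C (Fo X) (Go T1) \<longrightarrow>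
        (\<exists>T2 h b. PB T2 \<and> h \<in> Hom B T1 T2 \<and> b \<in> Hom C (Fo Y) (Go T2) \<and>
            Comp C b (Fm g) = Comp C (Gm h) a))"

end

theory Submission
  imports Defs
begin


lemma cat_obj: "category C \<Longrightarrow> f \<in> Hom C X Y \<Longrightarrow> X \<in> Obj C \<and> Y \<in> Obj C"
  unfolding category_def by (elim conjE; fast)
lemma cat_dom: "category C \<Longrightarrow> f \<in> Hom C X Y \<Longrightarrow> f \<in> Hom C X' Y' \<Longrightarrow> X = X' \<and> Y = Y'"
  unfolding category_def by (elim conjE) (erule allE[of _ X], erule allE[of _ Y], erule allE[of _ X'], erule allE[of _ Y'], erule allE[of _ f], simp)
lemma cat_id: "category C \<Longrightarrow> X \<in> Obj C \<Longrightarrow> Id C X \<in> Hom C X X"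
  unfolding category_def by (elim conjE; fast)
lemma cat_comp: "category C \<Longrightarrow> f \<in> Hom C X Y \<Longrightarrow> g \<in> Hom C Y Z \<Longrightarrow> Comp C g f \<in> Hom C X Z"
  unfolding category_def by (elim conjE; fast)
lemma cat_assoc: "category C \<Longrightarrow> f \<in> Hom C X Y \<Longrightarrow> g \<in> Hom C Y Z \<Longrightarrow> h \<in> Hom C Z W \<Longrightarrow>
   Comp C h (Comp C g f) = Comp C (Comp C h g) f"
  unfolding category_def by (elim conjE; fast)
lemma cat_idr: "category C \<Longrightarrow> f \<in> Hom C X Y \<Longrightarrow> Comp C f (Id C X) = f"
  unfolding category_def by (elim conjE; fast)
lemma cat_idl: "category C \<Longrightarrow> f \<in> Hom C X Y \<Longrightarrow> Comp C (Id C Y) f = f"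
  unfolding category_def by (elim conjE; fast)

lemma mono_cancel: "all_mono C \<Longrightarrow> m \<in> Hom C Y Z \<Longrightarrow> g \<in> Hom C X Y \<Longrightarrow> h \<in> Hom C X Y \<Longrightarrow>
   Comp C m g = Comp C m h \<Longrightarrow> g = h"
  unfolding all_mono_def is_mono_def by blast

lemma lim_ex: "limiting_cocone C s H M S f \<Longrightarrow> cocone C s H M S' f' \<Longrightarrow>
   \<exists>h \<in> Hom C S S'. \<forall>i \<in> Field s. Comp C h (f i) = f' i"
  unfolding limiting_cocone_def by blast
lemma lim_uniq: "limiting_cocone C s H M S f \<Longrightarrow> cocone C s H M S' f' \<Longrightarrow>
   h \<in> Hom C S S' \<Longrightarrow> \<forall>i \<in> Field s. Comp C h (f i) = f' i \<Longrightarrow>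
   h' \<in> Hom C S S' \<Longrightarrow> \<forall>i \<in> Field s. Comp C h' (f i) = f' i \<Longrightarrow> h = h'"
  unfolding limiting_cocone_def by blast
lemma lim_cocone: "limiting_cocone C s H M S f \<Longrightarrow> cocone C s H M S f"
  unfolding limiting_cocone_def by blast

lemma chain_hom: "chain C s H M \<Longrightarrow> (i,j) \<in> s \<Longrightarrow> M i j \<in> Hom C (H i) (H j)"
  unfolding chain_def by blast
lemma chain_obj: "chain C s H M \<Longrightarrow> i \<in> Field s \<Longrightarrow> H i \<in> Obj C"
  unfolding chain_def by blast
lemma chain_id: "chain C s H M \<Longrightarrow> i \<in> Field s \<Longrightarrow> M i i = Id C (H i)"
  unfolding chain_def by blast
lemma chain_comp: "chain C s H M \<Longrightarrow> (i,j) \<in> s \<Longrightarrow> (j,k) \<in> s \<Longrightarrow> Comp C (M j k) (M i j) = M i k"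
  unfolding chain_def by blast
lemma chain_wo: "chain C s H M \<Longrightarrow> Well_order s"
  unfolding chain_def by blast

lemma cocone_hom: "cocone C s H M S f \<Longrightarrow> i \<in> Field s \<Longrightarrow> f i \<in> Hom C (H i) S"
  unfolding cocone_def by blast
lemma cocone_comm: "cocone C s H M S f \<Longrightarrow> (i,j) \<in> s \<Longrightarrow> Comp C (f j) (M i j) = f i"
  unfolding cocone_def by blast

lemma lim_eq:
  assumes cat: "category C" and ch: "chain C s H M" and L: "limiting_cocone C s H M S f"
    and h: "h \<in> Hom C S S'" and h': "h' \<in> Hom C S S'"
    and eq: "\<And>i. i \<in> Field s \<Longrightarrow> Comp C h (f i) = Comp C h' (f i)"
  shows "h = h'"
proof -
  have co: "cocone C s H M S f" using L by (rule lim_cocone)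
  have S'o: "S' \<in> Obj C" using cat_obj[OF cat h] by blast
  have "cocone C s H M S' (\<lambda>i. Comp C h (f i))"
    unfolding cocone_def
  proof (intro conjI ballI allI impI)
    show "S' \<in> Obj C" by fact
    fix i assume "i \<in> Field s" thus "Comp C h (f i) \<in> Hom C (H i) S'"
      using cat_comp[OF cat cocone_hom[OF co] h] by blast
  next
    fix i j assume ij: "(i,j) \<in> s"
    have fj: "f j \<in> Hom C (H j) S" using cocone_hom[OF co] ij by (meson FieldI2)
    have "Comp C (Comp C h (f j)) (M i j) = Comp C h (Comp C (f j) (M i j))"
      using cat_assoc[OF cat chain_hom[OF ch ij] fj h] by simp
    also have "\<dots> = Comp C h (f i)" using cocone_comm[OF co ij] by simp
    finally show "Comp C (Comp C h (f j)) (M i j) = Comp C h (f i)" .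
  qed
  then show ?thesis using lim_uniq[OF L _ h _ h'] eq by metis
qed

locale regc =
  fixes r :: "'i rel"
  assumes reg: "regular_cardinal r"
begin

lemma co: "Card_order r" and inf: "\<not> finite (Field r)" and rc: "regularCard r"
  using reg unfolding regular_cardinal_def by auto

lemma wo: "Well_order r" using co unfolding card_order_on_def by simp

lemma refl: "i \<in> Field r \<Longrightarrow> (i,i) \<in> r"
  using wo unfolding order_on_defs refl_on_def by blast
lemma tot: "(i,j) \<in> r \<or> (j,i) \<in> r" if "i \<in> Field r" "j \<in> Field r"
proof (cases "i = j")
  case True then show ?thesis using refl that by simp
next
  case False
  have "total_on (Field r) r" using wo unfolding order_on_defs by simp
  then show ?thesis using False that unfolding total_on_def by blast
qed
lemma trans: "(i,j) \<in> r \<Longrightarrow> (j,k) \<in> r \<Longrightarrow> (i,k) \<in> r"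
  using wo unfolding order_on_defs trans_def by blast
lemma antisym: "(i,j) \<in> r \<Longrightarrow> (j,i) \<in> r \<Longrightarrow> i = j"
  using wo unfolding order_on_defs antisym_def by blast

lemma ub: assumes K: "K \<subseteq> Field r" and c: "(card_of K, r) \<in> ordLess"
  shows "\<exists>x \<in> Field r. \<forall>b \<in> K. (b,x) \<in> r"
proof -
  have "\<not> cofinal K r"
  proof
    assume "cofinal K r"
    hence "(card_of K, r) \<in> ordIso" using rc K unfolding regularCard_def by blast
    thus False using c not_ordLess_ordIso by blast
  qed
  then obtain x where x: "x \<in> Field r" "\<forall>b\<in>K. \<not>(x \<noteq> b \<and> (x,b) \<in> r)"
    unfolding cofinal_def by blast
  have "\<forall>b\<in>K. (b,x) \<in> r"
  proof
    fix b assume b: "b \<in> K"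
    show "(b,x) \<in> r"
    proof (cases "x = b")
      case True then show ?thesis using refl x(1) by simp
    next
      case False
      then have "(x,b) \<notin> r" using x(2) b by blast
      moreover have "b \<in> Field r" using b K by blast
      ultimately show ?thesis using tot[of b x] x(1) by blast
    qed
  qed
  with x show ?thesis by blast
qed

lemma fin_small: "finite K \<Longrightarrow> (card_of K, r) \<in> ordLess"
  using finite_ordLess_infinite[OF card_of_Well_order wo] inf by (simp add: Field_card_of)

lemma above: assumes "i \<in> Field r" shows "\<exists>x \<in> Field r. (i,x) \<in> r \<and> x \<noteq> i"
proof -
  have "Field r \<noteq> under r i" using Card_order_infinite_not_under[OF co inf] by blast
  moreover have "under r i \<subseteq> Field r" unfolding under_def by (auto intro: FieldI1)
  ultimately obtain x where x: "x \<in> Field r" "x \<notin> under r i" by blast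
  hence "(x,i) \<notin> r" unfolding under_def by blast
  moreover have "(i,x) \<in> r" using tot[OF assms x(1)] \<open>(x,i) \<notin> r\<close> by blast
  moreover have "x \<noteq> i" using \<open>(x,i) \<notin> r\<close> refl[OF assms] by blast
  ultimately show ?thesis using x(1) by blast
qed

lemma ub2: assumes "i \<in> Field r" "j \<in> Field r" shows "\<exists>x \<in> Field r. (i,x) \<in> r \<and> (j,x) \<in> r"
proof (cases "(i,j) \<in> r")
  case True then show ?thesis using assms refl by blast
next
  case False then have "(j,i) \<in> r" using tot assms by blast
  then show ?thesis using assms refl by blast
qed

lemma ub2s: assumes "i \<in> Field r" "j \<in> Field r" shows "\<exists>x \<in> Field r. (i,x) \<in> r \<and> x \<noteq> i \<and> (j,x) \<in> r"
proof -
  obtain y where y: "y \<in> Field r" "(i,y) \<in> r" "(j,y) \<in> r" using ub2 assms by blast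
  obtain x where x: "x \<in> Field r" "(y,x) \<in> r" "x \<noteq> y" using above[OF y(1)] by blast
  have "x \<noteq> i"
  proof
    assume "x = i"
    then have "y = i" using antisym[of y i] x(2) y(2) by simp
    then show False using x(3) \<open>x = i\<close> by simp
  qed
  moreover have "(i,x) \<in> r" using trans[OF y(2) x(2)] .
  moreover have "(j,x) \<in> r" using trans[OF y(3) x(2)] .
  ultimately show ?thesis using x(1) by blast
qed




end

lemma small_obj: "small C r A \<Longrightarrow> A \<in> Obj C" unfolding small_def by blast
lemma small_fac: "small C r A \<Longrightarrow> chain C r Ho Hm \<Longrightarrow> limiting_cocone C r Ho Hm S f \<Longrightarrow> h \<in> Hom C A S \<Longrightarrow>
   \<exists>j \<in> Field r. \<exists>g \<in> Hom C A (Ho j). h = Comp C (f j) g"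
  unfolding small_def by blast

locale chainctx = regc r for r :: "'i rel" +
  fixes C :: "('o,'m) category" and X :: "'i \<Rightarrow> 'o" and a :: "'i \<Rightarrow> 'i \<Rightarrow> 'm"
  assumes cat: "category C" and mono: "all_mono C" and sa: "semi_algebroidal C r" and ch: "chain C r X a"
begin

abbreviation cp (infixl "\<cdot>" 70) where "g \<cdot> f \<equiv> Comp C g f"

lemma A: "f \<in> Hom C X1 Y \<Longrightarrow> g \<in> Hom C Y Z1 \<Longrightarrow> h \<in> Hom C Z1 W \<Longrightarrow> h \<cdot> (g \<cdot> f) = h \<cdot> g \<cdot> f"
  using cat_assoc[OF cat] by blast
lemma H: "f \<in> Hom C X1 Y \<Longrightarrow> g \<in> Hom C Y Z1 \<Longrightarrow> g \<cdot> f \<in> Hom C X1 Z1"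
  using cat_comp[OF cat] by blast

lemma ah: "(i,j) \<in> r \<Longrightarrow> a i j \<in> Hom C (X i) (X j)" using chain_hom[OF ch] .
lemma ac: "(i,j) \<in> r \<Longrightarrow> (j,k) \<in> r \<Longrightarrow> a j k \<cdot> a i j = a i k" using chain_comp[OF ch] .

definition "rep i = (SOME t. chain C r (fst t) (fst (snd t)) \<and> (\<forall>k\<in>Field r. small C r (fst t k)) \<and>
    limiting_cocone C r (fst t) (fst (snd t)) (X i) (snd (snd t)))"
definition "Z i = fst (rep i)"
definition "e i = fst (snd (rep i))"
definition "p i = snd (snd (rep i))"

lemma rep: assumes i: "i \<in> Field r"
  shows "chain C r (Z i) (e i) \<and> (\<forall>k\<in>Field r. small C r (Z i k)) \<and> limiting_cocone C r (Z i) (e i) (X i) (p i)"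
proof -
  have "X i \<in> Obj C" using chain_obj[OF ch i] .
  then obtain Ho Hm f where "chain C r Ho Hm \<and> (\<forall>k\<in>Field r. small C r (Ho k)) \<and> limiting_cocone C r Ho Hm (X i) f"
    using sa unfolding semi_algebroidal_def by blast
  then have "\<exists>t. chain C r (fst t) (fst (snd t)) \<and> (\<forall>k\<in>Field r. small C r (fst t k)) \<and>
    limiting_cocone C r (fst t) (fst (snd t)) (X i) (snd (snd t))"
    by (intro exI[of _ "(Ho, Hm, f)"]) simp
  from someI_ex[OF this] show ?thesis unfolding Z_def e_def p_def rep_def .
qed

lemma Zch: "i \<in> Field r \<Longrightarrow> chain C r (Z i) (e i)" using rep by blast
lemma Zsm: "i \<in> Field r \<Longrightarrow> k \<in> Field r \<Longrightarrow> small C r (Z i k)" using rep by blast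
lemma Zlim: "i \<in> Field r \<Longrightarrow> limiting_cocone C r (Z i) (e i) (X i) (p i)" using rep by blast
lemma ph: "i \<in> Field r \<Longrightarrow> k \<in> Field r \<Longrightarrow> p i k \<in> Hom C (Z i k) (X i)"
  using cocone_hom[OF lim_cocone[OF Zlim]] .
lemma pc: "i \<in> Field r \<Longrightarrow> (k,l) \<in> r \<Longrightarrow> p i l \<cdot> e i k l = p i k"
  using cocone_comm[OF lim_cocone[OF Zlim]] .
lemma eh: "i \<in> Field r \<Longrightarrow> (k,l) \<in> r \<Longrightarrow> e i k l \<in> Hom C (Z i k) (Z i l)"
  using chain_hom[OF Zch] .

definition "fac b m g k \<longleftrightarrow> k \<in> Field r \<and> (\<exists>t \<in> Hom C (Z b m) (Z g k). a b g \<cdot> p b m = p g k \<cdot> t)"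

lemma fac_ex: assumes bg: "(b,g) \<in> r" and m: "m \<in> Field r" shows "\<exists>k \<in> Field r. fac b m g k"
proof -
  have b: "b \<in> Field r" and g: "g \<in> Field r" using bg by (auto intro: FieldI1 FieldI2)
  have "a b g \<cdot> p b m \<in> Hom C (Z b m) (X g)" using H[OF ph[OF b m] ah[OF bg]] .
  from small_fac[OF Zsm[OF b m] Zch[OF g] Zlim[OF g] this] obtain j t where
    "j \<in> Field r" "t \<in> Hom C (Z b m) (Z g j)" "a b g \<cdot> p b m = p g j \<cdot> t" by blast
  then show ?thesis unfolding fac_def by blast
qed

lemma fac_up: assumes f: "fac b m g k" and kk: "(k,k') \<in> r" and g: "g \<in> Field r" shows "fac b m g k'"
proof -
  obtain t where t: "t \<in> Hom C (Z b m) (Z g k)" "a b g \<cdot> p b m = p g k \<cdot> t" using f unfolding fac_def by blast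
  have k': "k' \<in> Field r" using kk by (auto intro: FieldI2)
  have "p g k' \<cdot> (e g k k' \<cdot> t) = p g k' \<cdot> e g k k' \<cdot> t" using A[OF t(1) eh[OF g kk] ph[OF g k']] .
  also have "\<dots> = p g k \<cdot> t" using pc[OF g kk] by simp
  finally have "a b g \<cdot> p b m = p g k' \<cdot> (e g k k' \<cdot> t)" using t(2) by simp
  moreover have "e g k k' \<cdot> t \<in> Hom C (Z b m) (Z g k')" using H[OF t(1) eh[OF g kk]] .
  ultimately show ?thesis unfolding fac_def using k' by blast
qed

lemma fac_down: assumes f: "fac b m g k" and mm: "(m',m) \<in> r" and bg: "(b,g) \<in> r" shows "fac b m' g k"
proof -
  obtain t where t: "t \<in> Hom C (Z b m) (Z g k)" "a b g \<cdot> p b m = p g k \<cdot> t" and k: "k \<in> Field r"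
    using f unfolding fac_def by blast
  have b: "b \<in> Field r" and g: "g \<in> Field r" using bg by (auto intro: FieldI1 FieldI2)
  have m: "m \<in> Field r" using mm by (auto intro: FieldI2)
  have e1: "e b m' m \<in> Hom C (Z b m') (Z b m)" using eh[OF b mm] .
  have "a b g \<cdot> p b m' = a b g \<cdot> (p b m \<cdot> e b m' m)" using pc[OF b mm] by simp
  also have "\<dots> = a b g \<cdot> p b m \<cdot> e b m' m" using A[OF e1 ph[OF b m] ah[OF bg]] .
  also have "\<dots> = p g k \<cdot> t \<cdot> e b m' m" using t(2) by simp
  also have "\<dots> = p g k \<cdot> (t \<cdot> e b m' m)" using A[OF e1 t(1) ph[OF g k]] by simp
  finally show ?thesis unfolding fac_def using k H[OF e1 t(1)] by blast
qed

definition "phi b m g = (SOME k. fac b m g k)"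
definition "mx k g = (if (k,g) \<in> r then g else k)"
definition "Fk f g = (SOME x. x \<in> Field r \<and> (\<forall>b. (b,g) \<in> r - Relation.Id \<longrightarrow> phi b (mx (f b) g) g \<in> Field r \<longrightarrow>
    (phi b (mx (f b) g) g, x) \<in> r))"
definition "kk = wfrec (r - Relation.Id) Fk"

lemma phi: "(b,g) \<in> r \<Longrightarrow> m \<in> Field r \<Longrightarrow> fac b m g (phi b m g)"
  unfolding phi_def using fac_ex by (meson someI_ex)

lemma kk_prop: assumes g: "g \<in> Field r"
  shows "kk g \<in> Field r \<and> (\<forall>b. (b,g) \<in> r - Relation.Id \<longrightarrow> phi b (mx (kk b) g) g \<in> Field r \<longrightarrow>
    (phi b (mx (kk b) g) g, kk g) \<in> r)"
proof -
  have wf: "wf (r - Relation.Id)" using wo_rel.WF wo unfolding wo_rel_def by blast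
  let ?f = "cut kk (r - Relation.Id) g"
  have eq: "kk g = Fk ?f g" unfolding kk_def by (rule wfrec[OF wf])
  let ?S = "{phi b (mx (?f b) g) g | b. (b,g) \<in> r - Relation.Id} \<inter> Field r"
  have "?S \<subseteq> (\<lambda>b. phi b (mx (?f b) g) g) ` underS r g" unfolding underS_def by auto
  then have "(card_of ?S, card_of ((\<lambda>b. phi b (mx (?f b) g) g) ` underS r g)) \<in> ordLeq"
    by (rule card_of_mono1)
  moreover have "(card_of ((\<lambda>b. phi b (mx (?f b) g) g) ` underS r g), card_of (underS r g)) \<in> ordLeq"
    by (rule card_of_image)
  moreover have "(card_of (underS r g), r) \<in> ordLess" using card_of_underS[OF co g] .
  ultimately have "(card_of ?S, r) \<in> ordLess" by (meson ordLeq_ordLess_trans ordLeq_transitive)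
  then obtain x where x: "x \<in> Field r" "\<forall>c \<in> ?S. (c,x) \<in> r" using ub[of ?S] by blast
  have "\<exists>x. x \<in> Field r \<and> (\<forall>b. (b,g) \<in> r - Relation.Id \<longrightarrow> phi b (mx (?f b) g) g \<in> Field r \<longrightarrow>
    (phi b (mx (?f b) g) g, x) \<in> r)"
    using x by blast
  from someI_ex[OF this] have "Fk ?f g \<in> Field r \<and> (\<forall>b. (b,g) \<in> r - Relation.Id \<longrightarrow> phi b (mx (?f b) g) g \<in> Field r \<longrightarrow>
    (phi b (mx (?f b) g) g, Fk ?f g) \<in> r)" unfolding Fk_def .
  moreover have "\<And>b. (b,g) \<in> r - Relation.Id \<Longrightarrow> ?f b = kk b" by (simp add: cut_apply)
  ultimately show ?thesis unfolding eq[symmetric] by simp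
qed

lemma kkF: "g \<in> Field r \<Longrightarrow> kk g \<in> Field r" using kk_prop by blast

lemma key: assumes bg: "(b,g) \<in> r" and ne: "b \<noteq> g" and m: "m \<in> Field r"
  and mm: "(m,g) \<in> r \<or> (m, kk b) \<in> r"
  shows "fac b m g (kk g)"
proof -
  have b: "b \<in> Field r" and g: "g \<in> Field r" using bg by (auto intro: FieldI1 FieldI2)
  let ?M = "mx (kk b) g"
  have MF: "?M \<in> Field r" unfolding mx_def using kkF[OF b] g by simp
  have mM: "(m, ?M) \<in> r"
  proof (cases "(kk b, g) \<in> r")
    case True
    then show ?thesis unfolding mx_def using mm trans[of m "kk b" g] by auto
  next
    case False
    then have "(g, kk b) \<in> r" using tot[OF kkF[OF b] g] by blast
    then show ?thesis unfolding mx_def using mm False trans[of m g "kk b"] by auto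
  qed
  have f1: "fac b ?M g (phi b ?M g)" using phi[OF bg MF] .
  then have "phi b ?M g \<in> Field r" unfolding fac_def by blast
  then have "(phi b ?M g, kk g) \<in> r" using kk_prop[OF g] bg ne by blast
  from fac_up[OF f1 this g] have "fac b ?M g (kk g)" .
  from fac_down[OF this mM bg] show ?thesis .
qed

definition "W g = Z g (kk g)"
definition "P g = p g (kk g)"
definition "w b g = (SOME t. t \<in> Hom C (W b) (W g) \<and> a b g \<cdot> P b = P g \<cdot> t)"

lemma Ph: "g \<in> Field r \<Longrightarrow> P g \<in> Hom C (W g) (X g)" unfolding P_def W_def using ph kkF by blast
lemma Wsm: "g \<in> Field r \<Longrightarrow> small C r (W g)" unfolding W_def using Zsm kkF by blast

lemma aid: "g \<in> Field r \<Longrightarrow> a g g = Id C (X g)" using chain_id[OF ch] .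

lemma w_ex: assumes bg: "(b,g) \<in> r" shows "\<exists>t. t \<in> Hom C (W b) (W g) \<and> a b g \<cdot> P b = P g \<cdot> t"
proof (cases "b = g")
  case True
  then have g: "g \<in> Field r" using bg by (auto intro: FieldI1)
  have "a g g \<cdot> P g = P g" using aid[OF g] cat_idl[OF cat Ph[OF g]] by simp
  moreover have "P g \<cdot> Id C (W g) = P g" using cat_idr[OF cat Ph[OF g]] .
  moreover have "Id C (W g) \<in> Hom C (W g) (W g)" using cat_id[OF cat small_obj[OF Wsm[OF g]]] .
  ultimately show ?thesis using True by metis
next
  case False
  have b: "b \<in> Field r" using bg by (auto intro: FieldI1)
  have "fac b (kk b) g (kk g)" using key[OF bg False kkF[OF b]] refl[OF kkF[OF b]] by blast
  then show ?thesis unfolding fac_def W_def P_def by blast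
qed

lemma w: "(b,g) \<in> r \<Longrightarrow> w b g \<in> Hom C (W b) (W g) \<and> a b g \<cdot> P b = P g \<cdot> w b g"
  unfolding w_def using someI_ex[OF w_ex] by blast
lemma wh: "(b,g) \<in> r \<Longrightarrow> w b g \<in> Hom C (W b) (W g)" using w by blast
lemma wc: "(b,g) \<in> r \<Longrightarrow> a b g \<cdot> P b = P g \<cdot> w b g" using w by blast

lemma Pmono: "g \<in> Field r \<Longrightarrow> t \<in> Hom C Y (W g) \<Longrightarrow> t' \<in> Hom C Y (W g) \<Longrightarrow> P g \<cdot> t = P g \<cdot> t' \<Longrightarrow> t = t'"
  using mono_cancel[OF mono Ph] by blast

lemma Wchain: "chain C r W w"
  unfolding chain_def
proof (intro conjI allI impI ballI)
  show "Well_order r" by (rule wo)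
next
  fix i assume i: "i \<in> Field r" then show "W i \<in> Obj C" using small_obj[OF Wsm] by blast
next
  fix i j assume "(i,j) \<in> r" then show "w i j \<in> Hom C (W i) (W j)" by (rule wh)
next
  fix i assume i: "i \<in> Field r"
  have ii: "(i,i) \<in> r" using refl[OF i] .
  have Io: "Id C (W i) \<in> Hom C (W i) (W i)" using cat_id[OF cat small_obj[OF Wsm[OF i]]] .
  have "P i \<cdot> w i i = a i i \<cdot> P i" using wc[OF ii] by simp
  also have "\<dots> = P i" using aid[OF i] cat_idl[OF cat Ph[OF i]] by simp
  also have "\<dots> = P i \<cdot> Id C (W i)" using cat_idr[OF cat Ph[OF i]] by simp
  finally show "w i i = Id C (W i)" using Pmono[OF i wh[OF ii] Io] by blast
next
  fix i j k assume ij: "(i,j) \<in> r \<and> (j,k) \<in> r"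
  then have ij: "(i,j) \<in> r" and jk: "(j,k) \<in> r" by auto
  have ik: "(i,k) \<in> r" using trans[OF ij jk] .
  have i: "i \<in> Field r" and j: "j \<in> Field r" and k: "k \<in> Field r" using ij jk by (auto intro: FieldI1 FieldI2)
  have "P k \<cdot> (w j k \<cdot> w i j) = P k \<cdot> w j k \<cdot> w i j" using A[OF wh[OF ij] wh[OF jk] Ph[OF k]] .
  also have "\<dots> = a j k \<cdot> P j \<cdot> w i j" using wc[OF jk] by simp
  also have "\<dots> = a j k \<cdot> (P j \<cdot> w i j)" using A[OF wh[OF ij] Ph[OF j] ah[OF jk]] by simp
  also have "\<dots> = a j k \<cdot> (a i j \<cdot> P i)" using wc[OF ij] by simp
  also have "\<dots> = a j k \<cdot> a i j \<cdot> P i" using A[OF Ph[OF i] ah[OF ij] ah[OF jk]] .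
  also have "\<dots> = P k \<cdot> w i k" using ac[OF ij jk] wc[OF ik] by simp
  finally show "w j k \<cdot> w i j = w i k" using Pmono[OF k H[OF wh[OF ij] wh[OF jk]] wh[OF ik]] by blast
qed

lemma Wcolim: "\<exists>L l. limiting_cocone C r W w L l"
proof -
  have "(r, r) \<in> ordLeq" using ordLeq_refl[OF co] .
  then have "\<forall>Ho Hm. chain C r Ho Hm \<and> (\<forall>i \<in> Field r. small C r (Ho i)) \<longrightarrow> has_colimit C r Ho Hm"
    using sa wo unfolding semi_algebroidal_def by blast
  then have "has_colimit C r W w" using Wchain Wsm by blast
  then show ?thesis unfolding has_colimit_def .
qed

definition "Lt = (SOME t. limiting_cocone C r W w (fst t) (snd t))"
definition "L = fst Lt"
definition "lam = snd Lt"

lemma Llim: "limiting_cocone C r W w L lam"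
proof -
  obtain L0 l0 where "limiting_cocone C r W w L0 l0" using Wcolim by blast
  then have "\<exists>t. limiting_cocone C r W w (fst t) (snd t)" by (intro exI[of _ "(L0,l0)"]) simp
  from someI_ex[OF this] show ?thesis unfolding L_def lam_def Lt_def .
qed
lemma lamh: "g \<in> Field r \<Longrightarrow> lam g \<in> Hom C (W g) L" using cocone_hom[OF lim_cocone[OF Llim]] .
lemma lamc: "(b,g) \<in> r \<Longrightarrow> lam g \<cdot> w b g = lam b" using cocone_comm[OF lim_cocone[OF Llim]] .
lemma Lobj: "L \<in> Obj C" using lim_cocone[OF Llim] unfolding cocone_def by blast

definition "valid i k g t \<longleftrightarrow> k \<in> Field r \<and> (i,g) \<in> r \<and> t \<in> Hom C (Z i k) (W g) \<and> a i g \<cdot> p i k = P g \<cdot> t"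

lemma valid_ex: assumes i: "i \<in> Field r" and k: "k \<in> Field r" shows "\<exists>g t. valid i k g t"
proof -
  obtain g where g: "g \<in> Field r" "(i,g) \<in> r" "g \<noteq> i" "(k,g) \<in> r" using ub2s[OF i k] by blast
  have "fac i k g (kk g)" using key[OF g(2) _ k] g by metis
  then show ?thesis unfolding fac_def valid_def W_def P_def using g(2) k by blast
qed

lemma valid_eq_le: assumes v: "valid i k g t" and v': "valid i k g' t'" and gg: "(g,g') \<in> r"
  shows "lam g \<cdot> t = lam g' \<cdot> t'"
proof -
  have t: "t \<in> Hom C (Z i k) (W g)" and ig: "(i,g) \<in> r" and te: "a i g \<cdot> p i k = P g \<cdot> t"
    and k: "k \<in> Field r" using v unfolding valid_def by auto
  have t': "t' \<in> Hom C (Z i k) (W g')" and te': "a i g' \<cdot> p i k = P g' \<cdot> t'"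
    using v' unfolding valid_def by auto
  have i: "i \<in> Field r" and g: "g \<in> Field r" and g': "g' \<in> Field r" using ig gg by (auto intro: FieldI1 FieldI2)
  have "P g' \<cdot> (w g g' \<cdot> t) = P g' \<cdot> w g g' \<cdot> t" using A[OF t wh[OF gg] Ph[OF g']] .
  also have "\<dots> = a g g' \<cdot> P g \<cdot> t" using wc[OF gg] by simp
  also have "\<dots> = a g g' \<cdot> (P g \<cdot> t)" using A[OF t Ph[OF g] ah[OF gg]] by simp
  also have "\<dots> = a g g' \<cdot> (a i g \<cdot> p i k)" using te by simp
  also have "\<dots> = a g g' \<cdot> a i g \<cdot> p i k" using A[OF ph[OF i k] ah[OF ig] ah[OF gg]] .
  also have "\<dots> = P g' \<cdot> t'" using ac[OF ig gg] te' by simp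
  finally have wt: "w g g' \<cdot> t = t'" using Pmono[OF g' H[OF t wh[OF gg]] t'] by blast
  have "lam g \<cdot> t = lam g' \<cdot> w g g' \<cdot> t" using lamc[OF gg] by simp
  also have "\<dots> = lam g' \<cdot> (w g g' \<cdot> t)" using A[OF t wh[OF gg] lamh[OF g']] by simp
  finally show ?thesis using wt by simp
qed

lemma valid_eq: assumes v: "valid i k g t" and v': "valid i k g' t'" shows "lam g \<cdot> t = lam g' \<cdot> t'"
proof -
  have "g \<in> Field r" "g' \<in> Field r" using v v' unfolding valid_def by (auto intro: FieldI2)
  then have "(g,g') \<in> r \<or> (g',g) \<in> r" using tot by blast
  then show ?thesis using valid_eq_le[OF v v'] valid_eq_le[OF v' v] by metis
qed

lemma valid_trans: assumes v: "valid j k' g t" and s: "s \<in> Hom C (Z i k) (Z j k')" and ij: "(i,j) \<in> r"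
  and se: "a i j \<cdot> p i k = p j k' \<cdot> s" and k: "k \<in> Field r"
  shows "valid i k g (t \<cdot> s)"
proof -
  have t: "t \<in> Hom C (Z j k') (W g)" and jg: "(j,g) \<in> r" and te: "a j g \<cdot> p j k' = P g \<cdot> t"
    and k': "k' \<in> Field r" using v unfolding valid_def by auto
  have i: "i \<in> Field r" and j: "j \<in> Field r" and g: "g \<in> Field r" using ij jg by (auto intro: FieldI1 FieldI2)
  have ig: "(i,g) \<in> r" using trans[OF ij jg] .
  have "a i g \<cdot> p i k = a j g \<cdot> a i j \<cdot> p i k" using ac[OF ij jg] by simp
  also have "\<dots> = a j g \<cdot> (a i j \<cdot> p i k)" using A[OF ph[OF i k] ah[OF ij] ah[OF jg]] by simp
  also have "\<dots> = a j g \<cdot> (p j k' \<cdot> s)" using se by simp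
  also have "\<dots> = a j g \<cdot> p j k' \<cdot> s" using A[OF s ph[OF j k'] ah[OF jg]] .
  also have "\<dots> = P g \<cdot> t \<cdot> s" using te by simp
  also have "\<dots> = P g \<cdot> (t \<cdot> s)" using A[OF s t Ph[OF g]] by simp
  finally show ?thesis unfolding valid_def using k ig H[OF s t] by blast
qed

definition "c i k = (SOME v. \<exists>g t. valid i k g t \<and> v = lam g \<cdot> t)"

lemma c_char: assumes v: "valid i k g t" shows "c i k = lam g \<cdot> t"
proof -
  have "\<exists>v g t. valid i k g t \<and> v = lam g \<cdot> t" using v by blast
  from someI_ex[OF this] obtain g' t' where "valid i k g' t'" "c i k = lam g' \<cdot> t'"
    unfolding c_def by blast
  then show ?thesis using valid_eq[OF _ v] by simp
qed

lemma chom: assumes i: "i \<in> Field r" and k: "k \<in> Field r" shows "c i k \<in> Hom C (Z i k) L"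
proof -
  obtain g t where v: "valid i k g t" using valid_ex[OF i k] by blast
  then have "t \<in> Hom C (Z i k) (W g)" "g \<in> Field r" unfolding valid_def by (auto intro: FieldI2)
  then show ?thesis using c_char[OF v] H lamh by metis
qed

definition "ell i = (SOME h. h \<in> Hom C (X i) L \<and> (\<forall>k\<in>Field r. h \<cdot> p i k = c i k))"

lemma c_cocone: assumes i: "i \<in> Field r" shows "cocone C r (Z i) (e i) L (c i)"
  unfolding cocone_def
proof (intro conjI ballI allI impI)
  show "L \<in> Obj C" by (rule Lobj)
next
  fix k assume "k \<in> Field r" then show "c i k \<in> Hom C (Z i k) L" using chom[OF i] by blast
next
  fix k l assume kl: "(k,l) \<in> r"
  have k: "k \<in> Field r" and l: "l \<in> Field r" using kl by (auto intro: FieldI1 FieldI2)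
  obtain g t where v: "valid i l g t" using valid_ex[OF i l] by blast
  have t: "t \<in> Hom C (Z i l) (W g)" and g: "g \<in> Field r" using v unfolding valid_def by (auto intro: FieldI2)
  have "a i i \<cdot> p i k = p i k" using aid[OF i] cat_idl[OF cat ph[OF i k]] by simp
  also have "\<dots> = p i l \<cdot> e i k l" using pc[OF i kl] by simp
  finally have v2: "valid i k g (t \<cdot> e i k l)" using valid_trans[OF v eh[OF i kl] refl[OF i] _ k] by blast
  have "c i l \<cdot> e i k l = lam g \<cdot> t \<cdot> e i k l" using c_char[OF v] by simp
  also have "\<dots> = lam g \<cdot> (t \<cdot> e i k l)" using A[OF eh[OF i kl] t lamh[OF g]] by simp
  also have "\<dots> = c i k" using c_char[OF v2] by simp
  finally show "c i l \<cdot> e i k l = c i k" .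
qed

lemma ell: assumes i: "i \<in> Field r" shows "ell i \<in> Hom C (X i) L \<and> (\<forall>k\<in>Field r. ell i \<cdot> p i k = c i k)"
proof -
  have "\<exists>h. h \<in> Hom C (X i) L \<and> (\<forall>k\<in>Field r. h \<cdot> p i k = c i k)"
    using lim_ex[OF Zlim[OF i] c_cocone[OF i]] by blast
  from someI_ex[OF this] show ?thesis unfolding ell_def .
qed
lemma ellh: "i \<in> Field r \<Longrightarrow> ell i \<in> Hom C (X i) L" using ell by blast
lemma ellc: "i \<in> Field r \<Longrightarrow> k \<in> Field r \<Longrightarrow> ell i \<cdot> p i k = c i k" using ell by blast

lemma ell_comm: assumes ij: "(i,j) \<in> r" shows "ell j \<cdot> a i j = ell i"
proof -
  have i: "i \<in> Field r" and j: "j \<in> Field r" using ij by (auto intro: FieldI1 FieldI2)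
  show ?thesis
  proof (rule lim_eq[OF cat Zch[OF i] Zlim[OF i] H[OF ah[OF ij] ellh[OF j]] ellh[OF i]])
    fix k assume k: "k \<in> Field r"
    obtain k' where fk: "fac i k j k'" using fac_ex[OF ij k] by blast
    then obtain s where s: "s \<in> Hom C (Z i k) (Z j k')" "a i j \<cdot> p i k = p j k' \<cdot> s" and k': "k' \<in> Field r"
      unfolding fac_def by blast
    obtain g t where v: "valid j k' g t" using valid_ex[OF j k'] by blast
    have t: "t \<in> Hom C (Z j k') (W g)" and g: "g \<in> Field r" using v unfolding valid_def by (auto intro: FieldI2)
    have v2: "valid i k g (t \<cdot> s)" using valid_trans[OF v s(1) ij s(2) k] .
    have "ell j \<cdot> a i j \<cdot> p i k = ell j \<cdot> (a i j \<cdot> p i k)" using A[OF ph[OF i k] ah[OF ij] ellh[OF j]] by simp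
    also have "\<dots> = ell j \<cdot> (p j k' \<cdot> s)" using s(2) by simp
    also have "\<dots> = ell j \<cdot> p j k' \<cdot> s" using A[OF s(1) ph[OF j k'] ellh[OF j]] .
    also have "\<dots> = lam g \<cdot> t \<cdot> s" using ellc[OF j k'] c_char[OF v] by simp
    also have "\<dots> = lam g \<cdot> (t \<cdot> s)" using A[OF s(1) t lamh[OF g]] by simp
    also have "\<dots> = ell i \<cdot> p i k" using c_char[OF v2] ellc[OF i k] by simp
    finally show "ell j \<cdot> a i j \<cdot> p i k = ell i \<cdot> p i k" .
  qed
qed

lemma ell_cocone: "cocone C r X a L ell"
  unfolding cocone_def using Lobj ellh ell_comm by blast

lemma lam_ell: assumes g: "g \<in> Field r" shows "lam g = ell g \<cdot> P g"
proof -
  have gg: "(g,g) \<in> r" using refl[OF g] .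
  have Io: "Id C (W g) \<in> Hom C (W g) (W g)" using cat_id[OF cat small_obj[OF Wsm[OF g]]] .
  have "a g g \<cdot> P g = P g" using aid[OF g] cat_idl[OF cat Ph[OF g]] by simp
  also have "\<dots> = P g \<cdot> Id C (W g)" using cat_idr[OF cat Ph[OF g]] by simp
  finally have v: "valid g (kk g) g (Id C (W g))" unfolding valid_def P_def W_def
    using gg Io kkF[OF g] unfolding W_def P_def by blast
  have "ell g \<cdot> P g = c g (kk g)" unfolding P_def using ellc[OF g kkF[OF g]] .
  also have "\<dots> = lam g \<cdot> Id C (W g)" using c_char[OF v] .
  also have "\<dots> = lam g" using cat_idr[OF cat lamh[OF g]] .
  finally show ?thesis by simp
qed

lemma colim: "limiting_cocone C r X a L ell"
  unfolding limiting_cocone_def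
proof (intro conjI allI impI)
  show "cocone C r X a L ell" by (rule ell_cocone)
next
  fix S' f' assume cf: "cocone C r X a S' f'"
  have f'h: "\<And>i. i \<in> Field r \<Longrightarrow> f' i \<in> Hom C (X i) S'" using cocone_hom[OF cf] .
  have f'c: "\<And>i j. (i,j) \<in> r \<Longrightarrow> f' j \<cdot> a i j = f' i" using cocone_comm[OF cf] .
  have cg: "cocone C r W w S' (\<lambda>g. f' g \<cdot> P g)"
    unfolding cocone_def
  proof (intro conjI ballI allI impI)
    show "S' \<in> Obj C" using cf unfolding cocone_def by blast
  next
    fix g assume g: "g \<in> Field r" show "f' g \<cdot> P g \<in> Hom C (W g) S'" using H[OF Ph[OF g] f'h[OF g]] .
  next
    fix b g assume bg: "(b,g) \<in> r"
    have b: "b \<in> Field r" and g: "g \<in> Field r" using bg by (auto intro: FieldI1 FieldI2)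
    have "f' g \<cdot> P g \<cdot> w b g = f' g \<cdot> (P g \<cdot> w b g)" using A[OF wh[OF bg] Ph[OF g] f'h[OF g]] by simp
    also have "\<dots> = f' g \<cdot> (a b g \<cdot> P b)" using wc[OF bg] by simp
    also have "\<dots> = f' g \<cdot> a b g \<cdot> P b" using A[OF Ph[OF b] ah[OF bg] f'h[OF g]] .
    also have "\<dots> = f' b \<cdot> P b" using f'c[OF bg] by simp
    finally show "f' g \<cdot> P g \<cdot> w b g = f' b \<cdot> P b" .
  qed
  obtain u where u: "u \<in> Hom C L S'" "\<And>g. g \<in> Field r \<Longrightarrow> u \<cdot> lam g = f' g \<cdot> P g"
    using lim_ex[OF Llim cg] by blast
  have ue: "u \<cdot> ell i = f' i" if i: "i \<in> Field r" for i
  proof (rule lim_eq[OF cat Zch[OF i] Zlim[OF i] H[OF ellh[OF i] u(1)] f'h[OF i]])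
    fix k assume k: "k \<in> Field r"
    obtain g t where v: "valid i k g t" using valid_ex[OF i k] by blast
    have t: "t \<in> Hom C (Z i k) (W g)" and g: "g \<in> Field r" and ig: "(i,g) \<in> r"
      and te: "a i g \<cdot> p i k = P g \<cdot> t" using v unfolding valid_def by (auto intro: FieldI2)
    have "u \<cdot> ell i \<cdot> p i k = u \<cdot> (ell i \<cdot> p i k)" using A[OF ph[OF i k] ellh[OF i] u(1)] by simp
    also have "\<dots> = u \<cdot> (lam g \<cdot> t)" using ellc[OF i k] c_char[OF v] by simp
    also have "\<dots> = u \<cdot> lam g \<cdot> t" using A[OF t lamh[OF g] u(1)] .
    also have "\<dots> = f' g \<cdot> P g \<cdot> t" using u(2)[OF g] by simp
    also have "\<dots> = f' g \<cdot> (P g \<cdot> t)" using A[OF t Ph[OF g] f'h[OF g]] by simp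
    also have "\<dots> = f' g \<cdot> (a i g \<cdot> p i k)" using te by simp
    also have "\<dots> = f' g \<cdot> a i g \<cdot> p i k" using A[OF ph[OF i k] ah[OF ig] f'h[OF g]] .
    also have "\<dots> = f' i \<cdot> p i k" using f'c[OF ig] by simp
    finally show "u \<cdot> ell i \<cdot> p i k = f' i \<cdot> p i k" .
  qed
  show "\<exists>!h. h \<in> Hom C L S' \<and> (\<forall>i\<in>Field r. h \<cdot> ell i = f' i)"
  proof (rule ex1I[of _ u])
    show "u \<in> Hom C L S' \<and> (\<forall>i\<in>Field r. u \<cdot> ell i = f' i)" using u(1) ue by blast
  next
    fix u' assume u': "u' \<in> Hom C L S' \<and> (\<forall>i\<in>Field r. u' \<cdot> ell i = f' i)"
    show "u' = u"
    proof (rule lim_eq[OF cat Wchain Llim _ u(1)])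
      show "u' \<in> Hom C L S'" using u' by blast
    next
      fix g assume g: "g \<in> Field r"
      have "u' \<cdot> lam g = u' \<cdot> (ell g \<cdot> P g)" using lam_ell[OF g] by simp
      also have "\<dots> = u' \<cdot> ell g \<cdot> P g" using A[OF Ph[OF g] ellh[OF g]] u' by blast
      also have "\<dots> = f' g \<cdot> P g" using u' g by simp
      also have "\<dots> = u \<cdot> lam g" using u(2)[OF g] by simp
      finally show "u' \<cdot> lam g = u \<cdot> lam g" .
    qed
  qed
qed

end

lemma chain_colimit:
  assumes "regular_cardinal r" "category C" "all_mono C" "semi_algebroidal C r" "chain C r X a"
  shows "\<exists>L l. limiting_cocone C r X a L l"
proof -
  interpret chainctx r C X a using assms by unfold_locales
  show ?thesis using colim by blast
qed



lemma comma_Obj: "(X,u,Y) \<in> Obj (comma A B C Fo Fm Go Gm) \<longleftrightarrow> X \<in> Obj A \<and> Y \<in> Obj B \<and> u \<in> Hom C (Fo X) (Go Y)"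
  by (simp add: comma_def)
lemma comma_Hom: "m \<in> Hom (comma A B C Fo Fm Go Gm) (X,u,Y) (X',u',Y') \<longleftrightarrow>
  (\<exists>a b. m = ((X,u,Y),(a,b),(X',u',Y')) \<and> X \<in> Obj A \<and> Y \<in> Obj B \<and> u \<in> Hom C (Fo X) (Go Y) \<and>
     X' \<in> Obj A \<and> Y' \<in> Obj B \<and> u' \<in> Hom C (Fo X') (Go Y') \<and>
     a \<in> Hom A X X' \<and> b \<in> Hom B Y Y' \<and> Comp C u' (Fm a) = Comp C (Gm b) u)"
  by (simp add: comma_def)
lemma comma_Comp: "Comp (comma A B C Fo Fm Go Gm) (S',(a',b'),T') (S,(a,b),T) = (S,(Comp A a' a, Comp B b' b),T')"
  by (simp add: comma_def)
lemma comma_Id: "Id (comma A B C Fo Fm Go Gm) (X,u,Y) = ((X,u,Y),(Id A X, Id B Y),(X,u,Y))"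
  by (simp add: comma_def)

lemma fun_obj: "is_functor C D Fo Fm \<Longrightarrow> X \<in> Obj C \<Longrightarrow> Fo X \<in> Obj D" unfolding is_functor_def by blast
lemma fun_hom: "is_functor C D Fo Fm \<Longrightarrow> f \<in> Hom C X Y \<Longrightarrow> Fm f \<in> Hom D (Fo X) (Fo Y)" unfolding is_functor_def by blast
lemma fun_id: "is_functor C D Fo Fm \<Longrightarrow> X \<in> Obj C \<Longrightarrow> Fm (Id C X) = Id D (Fo X)" unfolding is_functor_def by blast
lemma fun_comp: "is_functor C D Fo Fm \<Longrightarrow> f \<in> Hom C X Y \<Longrightarrow> g \<in> Hom C Y Z \<Longrightarrow> Fm (Comp C g f) = Comp D (Fm g) (Fm f)"
  unfolding is_functor_def by blast

lemma fun_chain: assumes F: "is_functor C D Fo Fm" and ch: "chain C s H M"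
  shows "chain D s (\<lambda>i. Fo (H i)) (\<lambda>i j. Fm (M i j))"
  unfolding chain_def
proof (intro conjI allI impI ballI)
  show "Well_order s" using chain_wo[OF ch] .
next
  fix i assume "i \<in> Field s" then show "Fo (H i) \<in> Obj D" using fun_obj[OF F chain_obj[OF ch]] by blast
next
  fix i j assume "(i,j) \<in> s" then show "Fm (M i j) \<in> Hom D (Fo (H i)) (Fo (H j))" using fun_hom[OF F chain_hom[OF ch]] by blast
next
  fix i assume i: "i \<in> Field s" then show "Fm (M i i) = Id D (Fo (H i))" using fun_id[OF F chain_obj[OF ch i]] chain_id[OF ch i] by simp
next
  fix i j k assume "(i,j) \<in> s \<and> (j,k) \<in> s"
  then show "Comp D (Fm (M j k)) (Fm (M i j)) = Fm (M i k)"
    using fun_comp[OF F chain_hom[OF ch] chain_hom[OF ch]] chain_comp[OF ch] by metis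
qed


lemma mono_can: "is_mono C m \<Longrightarrow> m \<in> Hom C Y Z \<Longrightarrow> g \<in> Hom C X Y \<Longrightarrow> h \<in> Hom C X Y \<Longrightarrow>
   Comp C m g = Comp C m h \<Longrightarrow> g = h"
  unfolding is_mono_def by blast

locale commactx = regc r for r :: "'i rel" +
  fixes A :: "('oa,'ma) category" and B :: "('ob,'mb) category" and C :: "('oc,'mc) category"
    and Fo :: "'oa \<Rightarrow> 'oc" and Fm :: "'ma \<Rightarrow> 'mc"
    and Go :: "'ob \<Rightarrow> 'oc" and Gm :: "'mb \<Rightarrow> 'mc"
  assumes catA: "category A" and catB: "category B" and catC: "category C"
    and saA: "semi_algebroidal A r" and saB: "semi_algebroidal B r"
    and monoA: "all_mono A" and monoB: "all_mono B"
    and F: "is_functor A C Fo Fm" and G: "is_functor B C Go Gm"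
    and F_cocont: "cocontinuous A C Fo Fm r"
    and G_mono: "preserves_monos B C Gm"
begin

abbreviation "K \<equiv> comma A B C Fo Fm Go Gm"

lemma AA: "f \<in> Hom A X1 Y \<Longrightarrow> g \<in> Hom A Y Z1 \<Longrightarrow> h \<in> Hom A Z1 W \<Longrightarrow> Comp A h (Comp A g f) = Comp A (Comp A h g) f"
  using cat_assoc[OF catA] by blast
lemma AB: "f \<in> Hom B X1 Y \<Longrightarrow> g \<in> Hom B Y Z1 \<Longrightarrow> h \<in> Hom B Z1 W \<Longrightarrow> Comp B h (Comp B g f) = Comp B (Comp B h g) f"
  using cat_assoc[OF catB] by blast
lemma AC: "f \<in> Hom C X1 Y \<Longrightarrow> g \<in> Hom C Y Z1 \<Longrightarrow> h \<in> Hom C Z1 W \<Longrightarrow> Comp C h (Comp C g f) = Comp C (Comp C h g) f"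
  using cat_assoc[OF catC] by blast
lemma HA: "f \<in> Hom A X1 Y \<Longrightarrow> g \<in> Hom A Y Z1 \<Longrightarrow> Comp A g f \<in> Hom A X1 Z1" using cat_comp[OF catA] by blast
lemma HB: "f \<in> Hom B X1 Y \<Longrightarrow> g \<in> Hom B Y Z1 \<Longrightarrow> Comp B g f \<in> Hom B X1 Z1" using cat_comp[OF catB] by blast
lemma HC: "f \<in> Hom C X1 Y \<Longrightarrow> g \<in> Hom C Y Z1 \<Longrightarrow> Comp C g f \<in> Hom C X1 Z1" using cat_comp[OF catC] by blast

lemma comma_small:
  assumes X0: "small A r X0" and Y0: "small B r Y0" and c: "c \<in> Hom C (Fo X0) (Go Y0)"
  shows "small K r (X0, c, Y0)"
  unfolding small_def
proof (intro conjI allI impI)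
  show "(X0, c, Y0) \<in> Obj K" using small_obj[OF X0] small_obj[OF Y0] c by (simp add: comma_Obj)
next
  fix Ho Hm S f h
  assume asm: "chain K r Ho Hm \<and> limiting_cocone K r Ho Hm S f \<and> h \<in> Hom K (X0, c, Y0) S"
  then have chK: "chain K r Ho Hm" and limK: "limiting_cocone K r Ho Hm S f" and hK: "h \<in> Hom K (X0, c, Y0) S"
    by auto
  have coK: "cocone K r Ho Hm S f" using lim_cocone[OF limK] .
  define Xc where "Xc i = fst (Ho i)" for i
  define uc where "uc i = fst (snd (Ho i))" for i
  define Yc where "Yc i = snd (snd (Ho i))" for i
  have Hoe: "Ho i = (Xc i, uc i, Yc i)" for i unfolding Xc_def uc_def Yc_def by simp
  define ac where "ac i j = fst (fst (snd (Hm i j)))" for i j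
  define bc where "bc i j = snd (fst (snd (Hm i j)))" for i j
  obtain XS cS YS where Se: "S = (XS, cS, YS)" by (cases S) blast
  define pa where "pa i = fst (fst (snd (f i)))" for i
  define pb where "pb i = snd (fst (snd (f i)))" for i
  have Hm: "Hm i j = (Ho i, (ac i j, bc i j), Ho j) \<and> ac i j \<in> Hom A (Xc i) (Xc j) \<and> bc i j \<in> Hom B (Yc i) (Yc j) \<and>
     uc i \<in> Hom C (Fo (Xc i)) (Go (Yc i)) \<and> uc j \<in> Hom C (Fo (Xc j)) (Go (Yc j)) \<and>
     Comp C (uc j) (Fm (ac i j)) = Comp C (Gm (bc i j)) (uc i)" if ij: "(i,j) \<in> r" for i j
  proof -
    have "Hm i j \<in> Hom K (Xc i, uc i, Yc i) (Xc j, uc j, Yc j)" using chain_hom[OF chK ij] Hoe by metis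
    then obtain a b where "Hm i j = ((Xc i, uc i, Yc i), (a,b), (Xc j, uc j, Yc j))" "a \<in> Hom A (Xc i) (Xc j)"
      "b \<in> Hom B (Yc i) (Yc j)" "uc i \<in> Hom C (Fo (Xc i)) (Go (Yc i))" "uc j \<in> Hom C (Fo (Xc j)) (Go (Yc j))"
      "Comp C (uc j) (Fm a) = Comp C (Gm b) (uc i)"
      unfolding comma_Hom by blast
    then show ?thesis unfolding ac_def bc_def using Hoe by simp
  qed
  have fi: "f i = (Ho i, (pa i, pb i), S) \<and> pa i \<in> Hom A (Xc i) XS \<and> pb i \<in> Hom B (Yc i) YS \<and>
     uc i \<in> Hom C (Fo (Xc i)) (Go (Yc i)) \<and> cS \<in> Hom C (Fo XS) (Go YS) \<and>
     Comp C cS (Fm (pa i)) = Comp C (Gm (pb i)) (uc i)" if i: "i \<in> Field r" for i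
  proof -
    have "f i \<in> Hom K (Xc i, uc i, Yc i) (XS, cS, YS)" using cocone_hom[OF coK i] Hoe Se by metis
    then obtain a b where "f i = ((Xc i, uc i, Yc i), (a,b), (XS, cS, YS))" "a \<in> Hom A (Xc i) XS"
      "b \<in> Hom B (Yc i) YS" "uc i \<in> Hom C (Fo (Xc i)) (Go (Yc i))" "cS \<in> Hom C (Fo XS) (Go YS)"
      "Comp C cS (Fm a) = Comp C (Gm b) (uc i)"
      unfolding comma_Hom by blast
    then show ?thesis unfolding pa_def pb_def using Hoe Se by simp
  qed
  have chA: "chain A r Xc ac"
    unfolding chain_def
  proof (intro conjI allI impI ballI)
    show "Well_order r" by (rule wo)
  next
    fix i assume i: "i \<in> Field r" show "Xc i \<in> Obj A" using chain_obj[OF chK i] Hoe comma_Obj by metis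
  next
    fix i j assume "(i,j) \<in> r" then show "ac i j \<in> Hom A (Xc i) (Xc j)" using Hm by blast
  next
    fix i assume i: "i \<in> Field r"
    have "Hm i i = Id K (Ho i)" using chain_id[OF chK i] .
    then show "ac i i = Id A (Xc i)" unfolding ac_def using Hoe comma_Id by (metis fst_conv snd_conv)
  next
    fix i j k assume "(i,j) \<in> r \<and> (j,k) \<in> r"
    then have ij: "(i,j) \<in> r" and jk: "(j,k) \<in> r" by auto
    have "Comp K (Hm j k) (Hm i j) = Hm i k" using chain_comp[OF chK ij jk] .
    then show "Comp A (ac j k) (ac i j) = ac i k" using Hm[OF ij] Hm[OF jk] unfolding ac_def
      by (metis comma_Comp fst_conv snd_conv)
  qed
  have chB: "chain B r Yc bc"
    unfolding chain_def
  proof (intro conjI allI impI ballI)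
    show "Well_order r" by (rule wo)
  next
    fix i assume i: "i \<in> Field r" show "Yc i \<in> Obj B" using chain_obj[OF chK i] Hoe comma_Obj by metis
  next
    fix i j assume "(i,j) \<in> r" then show "bc i j \<in> Hom B (Yc i) (Yc j)" using Hm by blast
  next
    fix i assume i: "i \<in> Field r"
    have "Hm i i = Id K (Ho i)" using chain_id[OF chK i] .
    then show "bc i i = Id B (Yc i)" unfolding bc_def using Hoe comma_Id by (metis fst_conv snd_conv)
  next
    fix i j k assume "(i,j) \<in> r \<and> (j,k) \<in> r"
    then have ij: "(i,j) \<in> r" and jk: "(j,k) \<in> r" by auto
    have "Comp K (Hm j k) (Hm i j) = Hm i k" using chain_comp[OF chK ij jk] .
    then show "Comp B (bc j k) (bc i j) = bc i k" using Hm[OF ij] Hm[OF jk] unfolding bc_def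
      by (metis comma_Comp fst_conv snd_conv)
  qed
  have XcO: "Xc i \<in> Obj A" and YcO: "Yc i \<in> Obj B" and ucH: "uc i \<in> Hom C (Fo (Xc i)) (Go (Yc i))"
    if i: "i \<in> Field r" for i
    using chain_obj[OF chK i] Hoe comma_Obj by metis+
  obtain L l where limA: "limiting_cocone A r Xc ac L l" using chain_colimit[OF reg catA monoA saA chA] by blast
  obtain M mm where limB: "limiting_cocone B r Yc bc M mm" using chain_colimit[OF reg catB monoB saB chB] by blast
  have coA: "cocone A r Xc ac L l" using lim_cocone[OF limA] .
  have coB: "cocone B r Yc bc M mm" using lim_cocone[OF limB] .
  have lh: "\<And>i. i \<in> Field r \<Longrightarrow> l i \<in> Hom A (Xc i) L" using cocone_hom[OF coA] .
  have mh: "\<And>i. i \<in> Field r \<Longrightarrow> mm i \<in> Hom B (Yc i) M" using cocone_hom[OF coB] .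
  have LO: "L \<in> Obj A" and MO: "M \<in> Obj B" using coA coB unfolding cocone_def by auto
  have limF: "limiting_cocone C r (\<lambda>i. Fo (Xc i)) (\<lambda>i j. Fm (ac i j)) (Fo L) (\<lambda>i. Fm (l i))"
    using F_cocont chA limA unfolding cocontinuous_def preserves_colimits_of_def by blast
  have coG: "cocone C r (\<lambda>i. Fo (Xc i)) (\<lambda>i j. Fm (ac i j)) (Go M) (\<lambda>i. Comp C (Gm (mm i)) (uc i))"
    unfolding cocone_def
  proof (intro conjI allI impI ballI)
    show "Go M \<in> Obj C" using fun_obj[OF G MO] .
  next
    fix i assume i: "i \<in> Field r"
    show "Comp C (Gm (mm i)) (uc i) \<in> Hom C (Fo (Xc i)) (Go M)" using HC[OF ucH[OF i] fun_hom[OF G mh[OF i]]] .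
  next
    fix i j assume ij: "(i,j) \<in> r"
    have i: "i \<in> Field r" and j: "j \<in> Field r" using ij by (auto intro: FieldI1 FieldI2)
    have Hij: "Hm i j = (Ho i, (ac i j, bc i j), Ho j)" "ac i j \<in> Hom A (Xc i) (Xc j)" "bc i j \<in> Hom B (Yc i) (Yc j)"
      "Comp C (uc j) (Fm (ac i j)) = Comp C (Gm (bc i j)) (uc i)" using Hm[OF ij] by auto
    have "Comp C (Comp C (Gm (mm j)) (uc j)) (Fm (ac i j)) = Comp C (Gm (mm j)) (Comp C (uc j) (Fm (ac i j)))"
      using AC[OF fun_hom[OF F Hij(2)] ucH[OF j] fun_hom[OF G mh[OF j]]] by simp
    also have "\<dots> = Comp C (Gm (mm j)) (Comp C (Gm (bc i j)) (uc i))" using Hij(4) by simp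
    also have "\<dots> = Comp C (Comp C (Gm (mm j)) (Gm (bc i j))) (uc i)"
      using AC[OF ucH[OF i] fun_hom[OF G Hij(3)] fun_hom[OF G mh[OF j]]] .
    also have "\<dots> = Comp C (Gm (mm i)) (uc i)"
      using fun_comp[OF G Hij(3) mh[OF j]] cocone_comm[OF coB ij] by simp
    finally show "Comp C (Comp C (Gm (mm j)) (uc j)) (Fm (ac i j)) = Comp C (Gm (mm i)) (uc i)" .
  qed
  obtain cL where cL: "cL \<in> Hom C (Fo L) (Go M)" "\<And>i. i \<in> Field r \<Longrightarrow> Comp C cL (Fm (l i)) = Comp C (Gm (mm i)) (uc i)"
    using lim_ex[OF limF coG] by blast
  have coL: "cocone K r Ho Hm (L, cL, M) (\<lambda>i. (Ho i, (l i, mm i), (L, cL, M)))"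
    unfolding cocone_def
  proof (intro conjI allI impI ballI)
    show "(L, cL, M) \<in> Obj K" using LO MO cL(1) by (simp add: comma_Obj)
  next
    fix i assume i: "i \<in> Field r"
    show "(Ho i, (l i, mm i), (L, cL, M)) \<in> Hom K (Ho i) (L, cL, M)"
      unfolding Hoe comma_Hom using XcO[OF i] YcO[OF i] ucH[OF i] LO MO cL lh[OF i] mh[OF i] i by simp
  next
    fix i j assume ij: "(i,j) \<in> r"
    have "Hm i j = (Ho i, (ac i j, bc i j), Ho j)" using Hm[OF ij] by blast
    then show "Comp K (Ho j, (l j, mm j), L, cL, M) (Hm i j) = (Ho i, (l i, mm i), L, cL, M)"
      using cocone_comm[OF coA ij] cocone_comm[OF coB ij] by (simp add: comma_Comp)
  qed
  obtain \<theta> where th: "\<theta> \<in> Hom K S (L, cL, M)" "\<And>i. i \<in> Field r \<Longrightarrow> Comp K \<theta> (f i) = (Ho i, (l i, mm i), (L, cL, M))"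
    using lim_ex[OF limK coL] by blast
  obtain \<alpha> \<beta> where ab: "\<theta> = (S, (\<alpha>, \<beta>), (L, cL, M))" "\<alpha> \<in> Hom A XS L" "\<beta> \<in> Hom B YS M"
    using th(1) unfolding Se comma_Hom by blast
  have apa: "Comp A \<alpha> (pa i) = l i" and bpb: "Comp B \<beta> (pb i) = mm i" if i: "i \<in> Field r" for i
    using th(2)[OF i] fi[OF i] ab(1) by (simp_all add: comma_Comp)
  have coXS: "cocone A r Xc ac XS pa"
    unfolding cocone_def
  proof (intro conjI allI impI ballI)
    show "XS \<in> Obj A" using ab(2) cat_obj[OF catA] by blast
  next
    fix i assume "i \<in> Field r" then show "pa i \<in> Hom A (Xc i) XS" using fi by blast
  next
    fix i j assume ij: "(i,j) \<in> r"
    have i: "i \<in> Field r" and j: "j \<in> Field r" using ij by (auto intro: FieldI1 FieldI2)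
    have "Comp K (f j) (Hm i j) = f i" using cocone_comm[OF coK ij] .
    then show "Comp A (pa j) (ac i j) = pa i" using Hm[OF ij] fi[OF i] fi[OF j] by (simp add: comma_Comp)
  qed
  have coYS: "cocone B r Yc bc YS pb"
    unfolding cocone_def
  proof (intro conjI allI impI ballI)
    show "YS \<in> Obj B" using ab(3) cat_obj[OF catB] by blast
  next
    fix i assume "i \<in> Field r" then show "pb i \<in> Hom B (Yc i) YS" using fi by blast
  next
    fix i j assume ij: "(i,j) \<in> r"
    have i: "i \<in> Field r" and j: "j \<in> Field r" using ij by (auto intro: FieldI1 FieldI2)
    have "Comp K (f j) (Hm i j) = f i" using cocone_comm[OF coK ij] .
    then show "Comp B (pb j) (bc i j) = pb i" using Hm[OF ij] fi[OF i] fi[OF j] by (simp add: comma_Comp)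
  qed
  obtain \<alpha>' where a': "\<alpha>' \<in> Hom A L XS" "\<And>i. i \<in> Field r \<Longrightarrow> Comp A \<alpha>' (l i) = pa i" using lim_ex[OF limA coXS] by blast
  obtain \<beta>' where b': "\<beta>' \<in> Hom B M YS" "\<And>i. i \<in> Field r \<Longrightarrow> Comp B \<beta>' (mm i) = pb i" using lim_ex[OF limB coYS] by blast
  have aa': "Comp A \<alpha> \<alpha>' = Id A L"
  proof (rule lim_eq[OF catA chA limA HA[OF a'(1) ab(2)] cat_id[OF catA LO]])
    fix i assume i: "i \<in> Field r"
    have "Comp A (Comp A \<alpha> \<alpha>') (l i) = Comp A \<alpha> (Comp A \<alpha>' (l i))" using AA[OF lh[OF i] a'(1) ab(2)] by simp
    also have "\<dots> = l i" using a'(2)[OF i] apa[OF i] by simp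
    also have "\<dots> = Comp A (Id A L) (l i)" using cat_idl[OF catA lh[OF i]] by simp
    finally show "Comp A (Comp A \<alpha> \<alpha>') (l i) = Comp A (Id A L) (l i)" .
  qed
  have XSO: "XS \<in> Obj A" using coXS unfolding cocone_def by blast
  have a'a: "Comp A \<alpha>' \<alpha> = Id A XS"
  proof (rule mono_cancel[OF monoA ab(2) HA[OF ab(2) a'(1)] cat_id[OF catA XSO]])
    have "Comp A \<alpha> (Comp A \<alpha>' \<alpha>) = Comp A (Comp A \<alpha> \<alpha>') \<alpha>" using AA[OF ab(2) a'(1) ab(2)] .
    also have "\<dots> = \<alpha>" using aa' cat_idl[OF catA ab(2)] by simp
    also have "\<dots> = Comp A \<alpha> (Id A XS)" using cat_idr[OF catA ab(2)] by simp
    finally show "Comp A \<alpha> (Comp A \<alpha>' \<alpha>) = Comp A \<alpha> (Id A XS)" .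
  qed
  have bb': "Comp B \<beta> \<beta>' = Id B M"
  proof (rule lim_eq[OF catB chB limB HB[OF b'(1) ab(3)] cat_id[OF catB MO]])
    fix i assume i: "i \<in> Field r"
    have "Comp B (Comp B \<beta> \<beta>') (mm i) = Comp B \<beta> (Comp B \<beta>' (mm i))" using AB[OF mh[OF i] b'(1) ab(3)] by simp
    also have "\<dots> = mm i" using b'(2)[OF i] bpb[OF i] by simp
    also have "\<dots> = Comp B (Id B M) (mm i)" using cat_idl[OF catB mh[OF i]] by simp
    finally show "Comp B (Comp B \<beta> \<beta>') (mm i) = Comp B (Id B M) (mm i)" .
  qed
  have YSO: "YS \<in> Obj B" using coYS unfolding cocone_def by blast
  have b'b: "Comp B \<beta>' \<beta> = Id B YS"
  proof (rule mono_cancel[OF monoB ab(3) HB[OF ab(3) b'(1)] cat_id[OF catB YSO]])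
    have "Comp B \<beta> (Comp B \<beta>' \<beta>) = Comp B (Comp B \<beta> \<beta>') \<beta>" using AB[OF ab(3) b'(1) ab(3)] .
    also have "\<dots> = \<beta>" using bb' cat_idl[OF catB ab(3)] by simp
    also have "\<dots> = Comp B \<beta> (Id B YS)" using cat_idr[OF catB ab(3)] by simp
    finally show "Comp B \<beta> (Comp B \<beta>' \<beta>) = Comp B \<beta> (Id B YS)" .
  qed
  obtain x y where xy: "h = ((X0, c, Y0), (x, y), S)" "x \<in> Hom A X0 XS" "y \<in> Hom B Y0 YS"
    "Comp C cS (Fm x) = Comp C (Gm y) c"
    using hK unfolding Se comma_Hom by blast
  obtain j1 x1 where x1: "j1 \<in> Field r" "x1 \<in> Hom A X0 (Xc j1)" "Comp A \<alpha> x = Comp A (l j1) x1"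
    using small_fac[OF X0 chA limA HA[OF xy(2) ab(2)]] by blast
  obtain j2 y1 where y1: "j2 \<in> Field r" "y1 \<in> Hom B Y0 (Yc j2)" "Comp B \<beta> y = Comp B (mm j2) y1"
    using small_fac[OF Y0 chB limB HB[OF xy(3) ab(3)]] by blast
  have xe: "x = Comp A (pa j1) x1"
  proof -
    have "x = Comp A (Comp A \<alpha>' \<alpha>) x" using a'a cat_idl[OF catA xy(2)] by simp
    also have "\<dots> = Comp A \<alpha>' (Comp A \<alpha> x)" using AA[OF xy(2) ab(2) a'(1)] by simp
    also have "\<dots> = Comp A \<alpha>' (Comp A (l j1) x1)" using x1(3) by simp
    also have "\<dots> = Comp A (pa j1) x1" using AA[OF x1(2) lh[OF x1(1)] a'(1)] a'(2)[OF x1(1)] by simp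
    finally show ?thesis .
  qed
  have ye: "y = Comp B (pb j2) y1"
  proof -
    have "y = Comp B (Comp B \<beta>' \<beta>) y" using b'b cat_idl[OF catB xy(3)] by simp
    also have "\<dots> = Comp B \<beta>' (Comp B \<beta> y)" using AB[OF xy(3) ab(3) b'(1)] by simp
    also have "\<dots> = Comp B \<beta>' (Comp B (mm j2) y1)" using y1(3) by simp
    also have "\<dots> = Comp B (pb j2) y1" using AB[OF y1(2) mh[OF y1(1)] b'(1)] b'(2)[OF y1(1)] by simp
    finally show ?thesis .
  qed
  obtain j where j: "j \<in> Field r" "(j1,j) \<in> r" "(j2,j) \<in> r" using ub2[OF x1(1) y1(1)] by blast
  define x' where "x' = Comp A (ac j1 j) x1"
  define y' where "y' = Comp B (bc j2 j) y1"
  have x'h: "x' \<in> Hom A X0 (Xc j)" unfolding x'_def using HA[OF x1(2)] Hm[OF j(2)] by blast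
  have y'h: "y' \<in> Hom B Y0 (Yc j)" unfolding y'_def using HB[OF y1(2)] Hm[OF j(3)] by blast
  have px: "Comp A (pa j) x' = x"
    unfolding x'_def xe using AA[OF x1(2) _ ] Hm[OF j(2)] fi[OF j(1)] cocone_comm[OF coXS j(2)] by metis
  have py: "Comp B (pb j) y' = y"
    unfolding y'_def ye using AB[OF y1(2) _ ] Hm[OF j(3)] fi[OF j(1)] cocone_comm[OF coYS j(3)] by metis
  have pbh: "pb j \<in> Hom B (Yc j) YS" and pah: "pa j \<in> Hom A (Xc j) XS" using fi[OF j(1)] by auto
  have cSh: "cS \<in> Hom C (Fo XS) (Go YS)" and fj: "Comp C cS (Fm (pa j)) = Comp C (Gm (pb j)) (uc j)"
    using fi[OF j(1)] by auto
  have mG: "is_mono C (Gm (pb j))" using G_mono monoB pbh unfolding preserves_monos_def all_mono_def by blast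
  have comm: "Comp C (uc j) (Fm x') = Comp C (Gm y') c"
  proof (rule mono_can[OF mG fun_hom[OF G pbh] HC[OF fun_hom[OF F x'h] ucH[OF j(1)]] HC[OF c fun_hom[OF G y'h]]])
    have "Comp C (Gm (pb j)) (Comp C (uc j) (Fm x')) = Comp C (Comp C (Gm (pb j)) (uc j)) (Fm x')"
      using AC[OF fun_hom[OF F x'h] ucH[OF j(1)] fun_hom[OF G pbh]] .
    also have "\<dots> = Comp C (Comp C cS (Fm (pa j))) (Fm x')" using fj by simp
    also have "\<dots> = Comp C cS (Comp C (Fm (pa j)) (Fm x'))" using AC[OF fun_hom[OF F x'h] fun_hom[OF F pah] cSh] by simp
    also have "\<dots> = Comp C cS (Fm x)" using fun_comp[OF F x'h pah] px by simp
    also have "\<dots> = Comp C (Gm y) c" using xy(4) .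
    also have "\<dots> = Comp C (Comp C (Gm (pb j)) (Gm y')) c" using fun_comp[OF G y'h pbh] py by simp
    also have "\<dots> = Comp C (Gm (pb j)) (Comp C (Gm y') c)" using AC[OF c fun_hom[OF G y'h] fun_hom[OF G pbh]] by simp
    finally show "Comp C (Gm (pb j)) (Comp C (uc j) (Fm x')) = Comp C (Gm (pb j)) (Comp C (Gm y') c)" .
  qed
  have gK: "((X0, c, Y0), (x', y'), Ho j) \<in> Hom K (X0, c, Y0) (Ho j)"
    unfolding Hoe comma_Hom using small_obj[OF X0] small_obj[OF Y0] c XcO[OF j(1)] YcO[OF j(1)] ucH[OF j(1)]
      x'h y'h comm by simp
  have "Comp K (f j) ((X0, c, Y0), (x', y'), Ho j) = h"
    using fi[OF j(1)] px py xy(1) by (simp add: comma_Comp)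
  then show "\<exists>j\<in>Field r. \<exists>g\<in>Hom K (X0, c, Y0) (Ho j). h = Comp K (f j) g"
    using gK j(1) by metis
qed

end


theorem proposition2p19:
  fixes r :: "'i rel"
    and A :: "('oa,'ma) category" and B :: "('ob,'mb) category" and C :: "('oc,'mc) category"
    and Fo :: "'oa \<Rightarrow> 'oc" and Fm :: "'ma \<Rightarrow> 'mc"
    and Go :: "'ob \<Rightarrow> 'oc" and Gm :: "'mb \<Rightarrow> 'mc"
    and U :: 'oa and u :: 'mc and T :: 'ob
  assumes reg: "regular_cardinal r"
    and catA: "category A" and catB: "category B" and catC: "category C"
    and algA: "algebroidal A r" and algB: "algebroidal B r"
    and monoA: "all_mono A" and monoB: "all_mono B"
    and F: "is_functor A C Fo Fm" and G: "is_functor B C Go Gm"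
    and F_faithful: "faithful A Fm"
    and F_cocont: "cocontinuous A C Fo Fm r"
    and F_small_cocont: "\<And>s :: 'i rel. Well_order s \<Longrightarrow> (s, r) \<in> ordLess \<Longrightarrow> small_cocontinuous A C Fo Fm s r"
    and F_pres_small: "preserves_smallness_wrt A B C Fo Go Gm r"
    and G_small_cocont: "small_cocontinuous B C Go Gm r r"
    and G_mono: "preserves_monos B C Gm"
    and hom_bound: "\<And>X Y. small A r X \<Longrightarrow> small B r Y \<Longrightarrow>
                       (card_of (Hom C (Fo X) (Go Y)), r) \<in> ordLeq"
    and jep: "joint_embedding (comma A B C Fo Fm Go Gm) (small (comma A B C Fo Fm Go Gm) r)"
    and ap: "amalgamation (comma A B C Fo Fm Go Gm) (small (comma A B C Fo Fm Go Gm) r)"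
    and univ: "universal (comma A B C Fo Fm Go Gm) (\<lambda>X. X \<in> Obj (comma A B C Fo Fm Go Gm)) (U, u, T)"
    and homog: "homogeneous (comma A B C Fo Fm Go Gm) (small (comma A B C Fo Fm Go Gm) r) (U, u, T)"
  shows "saturated A (small A r) U \<longleftrightarrow>
         mixed_amalgamation A B C Fo Fm Go Gm (small A r) (small B r)"
proof -
  interpret commactx r A B C Fo Fm Go Gm
    using reg catA catB catC algA algB monoA monoB F G F_cocont G_mono
    unfolding algebroidal_def by unfold_locales blast+
  have UO: "U \<in> Obj A" and TO: "T \<in> Obj B" and uh: "u \<in> Hom C (Fo U) (Go T)"
    using univ unfolding universal_def by (simp_all add: comma_Obj)
  obtain Ho Hm fT where chT: "chain B r Ho Hm" and smT: "\<And>i. i \<in> Field r \<Longrightarrow> small B r (Ho i)"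
    and limT: "limiting_cocone B r Ho Hm T fT"
    using saB TO unfolding semi_algebroidal_def by blast
  have coT: "cocone B r Ho Hm T fT" using lim_cocone[OF limT] .
  have fTh: "\<And>i. i \<in> Field r \<Longrightarrow> fT i \<in> Hom B (Ho i) T" using cocone_hom[OF coT] .
  show ?thesis
  proof
    assume sat: "saturated A (small A r) U"
    show "mixed_amalgamation A B C Fo Fm Go Gm (small A r) (small B r)"
      unfolding mixed_amalgamation_def
    proof (intro allI impI)
      fix X Y T1 g a0
      assume "small A r X \<and> small A r Y \<and> small B r T1 \<and> g \<in> Hom A X Y \<and> a0 \<in> Hom C (Fo X) (Go T1)"
      then have X: "small A r X" and Y: "small A r Y" and T1: "small B r T1" and g: "g \<in> Hom A X Y"
        and a0: "a0 \<in> Hom C (Fo X) (Go T1)" by auto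
      have "(X, a0, T1) \<in> Obj K" using small_obj[OF X] small_obj[OF T1] a0 by (simp add: comma_Obj)
      then obtain m where "m \<in> Hom K (X, a0, T1) (U, u, T)" using univ unfolding universal_def by blast
      then obtain x t where xt: "x \<in> Hom A X U" "t \<in> Hom B T1 T" "Comp C u (Fm x) = Comp C (Gm t) a0"
        unfolding comma_Hom by blast
      obtain h where h: "h \<in> Hom A Y U" "Comp A h g = x" using sat X Y xt(1) g unfolding saturated_def by blast
      have uh2: "Comp C u (Fm h) \<in> Hom C (Fo Y) (Go T)" using HC[OF fun_hom[OF F h(1)] uh] .
      obtain j1 h1 where h1: "j1 \<in> Field r" "h1 \<in> Hom C (Fo Y) (Go (Ho j1))" "Comp C (Gm (fT j1)) h1 = Comp C u (Fm h)"
        using F_pres_small chT limT Y uh2 unfolding preserves_smallness_wrt_def by blast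
      obtain j2 t1 where t1: "j2 \<in> Field r" "t1 \<in> Hom B T1 (Ho j2)" "t = Comp B (fT j2) t1"
        using small_fac[OF T1 chT limT xt(2)] by blast
      obtain j where j: "j \<in> Field r" "(j1,j) \<in> r" "(j2,j) \<in> r" using ub2[OF h1(1) t1(1)] by blast
      define hh where "hh = Comp B (Hm j2 j) t1"
      define b where "b = Comp C (Gm (Hm j1 j)) h1"
      have m1: "Hm j1 j \<in> Hom B (Ho j1) (Ho j)" and m2: "Hm j2 j \<in> Hom B (Ho j2) (Ho j)"
        using chain_hom[OF chT] j by auto
      have hhh: "hh \<in> Hom B T1 (Ho j)" unfolding hh_def using HB[OF t1(2) m2] .
      have bh: "b \<in> Hom C (Fo Y) (Go (Ho j))" unfolding b_def using HC[OF h1(2) fun_hom[OF G m1]] .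
      have mG: "is_mono C (Gm (fT j))" using G_mono monoB fTh[OF j(1)] unfolding preserves_monos_def all_mono_def by blast
      have Ggj: "Gm (fT j) \<in> Hom C (Go (Ho j)) (Go T)" using fun_hom[OF G fTh[OF j(1)]] .
      have e1: "Comp C (Gm (fT j)) b = Comp C u (Fm h)"
      proof -
        have "Comp C (Gm (fT j)) b = Comp C (Comp C (Gm (fT j)) (Gm (Hm j1 j))) h1"
          unfolding b_def using AC[OF h1(2) fun_hom[OF G m1] Ggj] .
        also have "\<dots> = Comp C (Gm (fT j1)) h1"
          using fun_comp[OF G m1 fTh[OF j(1)]] cocone_comm[OF coT j(2)] by simp
        finally show ?thesis using h1(3) by simp
      qed
      have e2: "Comp C (Gm (fT j)) (Gm hh) = Gm t"
      proof -
        have "Comp C (Gm (fT j)) (Gm hh) = Gm (Comp B (fT j) hh)" using fun_comp[OF G hhh fTh[OF j(1)]] by simp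
        also have "Comp B (fT j) hh = Comp B (Comp B (fT j) (Hm j2 j)) t1"
          unfolding hh_def using AB[OF t1(2) m2 fTh[OF j(1)]] .
        also have "\<dots> = t" using cocone_comm[OF coT j(3)] t1(3) by simp
        finally show ?thesis .
      qed
      have eq: "Comp C b (Fm g) = Comp C (Gm hh) a0"
      proof (rule mono_can[OF mG Ggj HC[OF fun_hom[OF F g] bh] HC[OF a0 fun_hom[OF G hhh]]])
        have "Comp C (Gm (fT j)) (Comp C b (Fm g)) = Comp C (Comp C (Gm (fT j)) b) (Fm g)"
          using AC[OF fun_hom[OF F g] bh Ggj] .
        also have "\<dots> = Comp C (Comp C u (Fm h)) (Fm g)" using e1 by simp
        also have "\<dots> = Comp C u (Comp C (Fm h) (Fm g))" using AC[OF fun_hom[OF F g] fun_hom[OF F h(1)] uh] by simp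
        also have "\<dots> = Comp C u (Fm x)" using fun_comp[OF F g h(1)] h(2) by simp
        also have "\<dots> = Comp C (Gm t) a0" using xt(3) .
        also have "\<dots> = Comp C (Comp C (Gm (fT j)) (Gm hh)) a0" using e2 by simp
        also have "\<dots> = Comp C (Gm (fT j)) (Comp C (Gm hh) a0)" using AC[OF a0 fun_hom[OF G hhh] Ggj] by simp
        finally show "Comp C (Gm (fT j)) (Comp C b (Fm g)) = Comp C (Gm (fT j)) (Comp C (Gm hh) a0)" .
      qed
      show "\<exists>T2 h b. small B r T2 \<and> h \<in> Hom B T1 T2 \<and> b \<in> Hom C (Fo Y) (Go T2) \<and>
            Comp C b (Fm g) = Comp C (Gm h) a0"
        using smT[OF j(1)] hhh bh eq by blast
    qed
  next
    assume mix: "mixed_amalgamation A B C Fo Fm Go Gm (small A r) (small B r)"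
    show "saturated A (small A r) U"
      unfolding saturated_def
    proof (intro allI impI)
      fix X Y f g
      assume "small A r X \<and> small A r Y \<and> f \<in> Hom A X U \<and> g \<in> Hom A X Y"
      then have X: "small A r X" and Y: "small A r Y" and f: "f \<in> Hom A X U" and g: "g \<in> Hom A X Y" by auto
      have uf: "Comp C u (Fm f) \<in> Hom C (Fo X) (Go T)" using HC[OF fun_hom[OF F f] uh] .
      obtain j c where c: "j \<in> Field r" "c \<in> Hom C (Fo X) (Go (Ho j))" "Comp C (Gm (fT j)) c = Comp C u (Fm f)"
        using F_pres_small chT limT X uf unfolding preserves_smallness_wrt_def by blast
      obtain T2 hh b where hb: "small B r T2" "hh \<in> Hom B (Ho j) T2" "b \<in> Hom C (Fo Y) (Go T2)"
        "Comp C b (Fm g) = Comp C (Gm hh) c"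
        using mix X Y smT[OF c(1)] g c(2) unfolding mixed_amalgamation_def by blast
      have "(Y, b, T2) \<in> Obj K" using small_obj[OF Y] small_obj[OF hb(1)] hb(3) by (simp add: comma_Obj)
      then obtain m where "m \<in> Hom K (Y, b, T2) (U, u, T)" using univ unfolding universal_def by blast
      then obtain y t where yt: "y \<in> Hom A Y U" "t \<in> Hom B T2 T" "Comp C u (Fm y) = Comp C (Gm t) b"
        unfolding comma_Hom by blast
      have P0: "small K r (X, c, Ho j)" using comma_small[OF X smT[OF c(1)] c(2)] .
      have HoO: "Ho j \<in> Obj B" using small_obj[OF smT[OF c(1)]] .
      have ygh: "Comp A y g \<in> Hom A X U" using HA[OF g yt(1)] .
      have thh: "Comp B t hh \<in> Hom B (Ho j) T" using HB[OF hb(2) yt(2)] .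
      have cm1: "Comp C u (Fm (Comp A y g)) = Comp C (Gm (Comp B t hh)) c"
      proof -
        have "Comp C u (Fm (Comp A y g)) = Comp C u (Comp C (Fm y) (Fm g))" using fun_comp[OF F g yt(1)] by simp
        also have "\<dots> = Comp C (Comp C u (Fm y)) (Fm g)" using AC[OF fun_hom[OF F g] fun_hom[OF F yt(1)] uh] .
        also have "\<dots> = Comp C (Comp C (Gm t) b) (Fm g)" using yt(3) by simp
        also have "\<dots> = Comp C (Gm t) (Comp C b (Fm g))" using AC[OF fun_hom[OF F g] hb(3) fun_hom[OF G yt(2)]] by simp
        also have "\<dots> = Comp C (Gm t) (Comp C (Gm hh) c)" using hb(4) by simp
        also have "\<dots> = Comp C (Comp C (Gm t) (Gm hh)) c" using AC[OF c(2) fun_hom[OF G hb(2)] fun_hom[OF G yt(2)]] .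
        also have "\<dots> = Comp C (Gm (Comp B t hh)) c" using fun_comp[OF G hb(2) yt(2)] by simp
        finally show ?thesis .
      qed
      have m1: "((X, c, Ho j), (Comp A y g, Comp B t hh), (U, u, T)) \<in> Hom K (X, c, Ho j) (U, u, T)"
        unfolding comma_Hom using small_obj[OF X] HoO c(2) UO TO uh ygh thh cm1 by simp
      have m2: "((X, c, Ho j), (f, fT j), (U, u, T)) \<in> Hom K (X, c, Ho j) (U, u, T)"
        unfolding comma_Hom using small_obj[OF X] HoO c(2) UO TO uh f fTh[OF c(1)] c(3) by simp
      obtain \<sigma> where sg: "automorphism K (U, u, T) \<sigma>"
        "Comp K \<sigma> ((X, c, Ho j), (Comp A y g, Comp B t hh), (U, u, T)) = ((X, c, Ho j), (f, fT j), (U, u, T))"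
        using homog P0 m1 m2 unfolding homogeneous_def by blast
      then have "\<sigma> \<in> Hom K (U, u, T) (U, u, T)" unfolding automorphism_def by blast
      then obtain sa sb where s: "\<sigma> = ((U, u, T), (sa, sb), (U, u, T))" "sa \<in> Hom A U U"
        unfolding comma_Hom by blast
      have "Comp A sa (Comp A y g) = f" using sg(2) unfolding s(1) by (simp add: comma_Comp)
      then have "Comp A (Comp A sa y) g = f" using AA[OF g yt(1) s(2)] by simp
      then show "\<exists>h\<in>Hom A Y U. Comp A h g = f" using HA[OF yt(1) s(2)] by blast
    qed
  qed
qed

end
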